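(* Let $N\ge 6$ be even but not a multiple of $4$, and $0\le r_1<\dots<r_N\le 1$. Let $\pi$ be the 2-factor consisting of the six-cycle $(r_1,r_{N/2},r_N,r_{N/2+1},r_2,r_{N/2+2})$ together with the $(N-6)/4$ four-cycles $(r_a,r_{a+N/2},r_{a+1},r_{a+N/2+1})$ for $a=3,5,\dots,\frac N2-2$. For $k=0,1,\dots,N-1$ let $h_k^*$ be the 2-factor obtained from $\pi$ by replacing every vertex $r_i$ by $r_{i+k}$ (index taken mod $N$ in $\{1,\dots,N\}$). Then the 2-factors $h_k^*$, $k=0,\dots,N-1$, are exactly the 2-factors of $\mathcal K_N$ having the maximum number of crossing pairs of edges.
   Context: A 2-factor of $\mathcal K_N$ is a spanning subgraph in which each vertex has degree $2$, i.e. a covering of all vertices by vertex-disjoint cycles of length at least $3$; a cycle written $(v_1,\dots,v_m)$ has edges $\{v_i,v_{i+1}\}$ and $\{v_m,v_1\}$. Two edges $\{r_i,r_j\}$, $\{r_k,r_\ell\}$ with $i<j$, $k<\ell$ cross if $i<k<j<\ell$ or $k<i<\ell<j$; the number of crossings of a 2-factor is the number of unordered pairs of its edges that cross. *)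

theory Defs
  imports Main
begin

text \<open>Vertices r_1 < ... < r_N are represented by their indices 1..N; crossings
depend only on the indices. An edge is a 2-element set of indices.\<close>

definition two_factor :: "nat \<Rightarrow> nat set set \<Rightarrow> bool" where
  "two_factor N F \<longleftrightarrow>
     F \<subseteq> {{i, j} | i j. i \<in> {1..N} \<and> j \<in> {1..N} \<and> i \<noteq> j} \<and>
     (\<forall>v\<in>{1..N}. card {e\<in>F. v \<in> e} = 2)"

definition crosses :: "nat set \<Rightarrow> nat set \<Rightarrow> bool" where
  "crosses e f \<longleftrightarrow> (\<exists>i j k l. e = {i, j} \<and> f = {k, l} \<and> i < j \<and> k < l \<and>
      ((i < k \<and> k < j \<and> j < l) \<or> (k < i \<and> i < l \<and> l < j)))"

definition crossings :: "nat set set \<Rightarrow> nat" where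
  "crossings F = card {{e, f} | e f. e \<in> F \<and> f \<in> F \<and> crosses e f}"

definition cycle_edges :: "nat list \<Rightarrow> nat set set" where
  "cycle_edges vs = {{vs ! i, vs ! ((i + 1) mod length vs)} | i. i < length vs}"

definition pi_factor :: "nat \<Rightarrow> nat set set" where
  "pi_factor N =
     cycle_edges [1, N div 2, N, N div 2 + 1, 2, N div 2 + 2] \<union>
     (\<Union>a\<in>{a. odd a \<and> 3 \<le> a \<and> a + 2 \<le> N div 2}.
        cycle_edges [a, a + N div 2, a + 1, a + N div 2 + 1])"

definition shift_idx :: "nat \<Rightarrow> nat \<Rightarrow> nat \<Rightarrow> nat" where
  "shift_idx N k i = (i - 1 + k) mod N + 1"

definition h_star :: "nat \<Rightarrow> nat \<Rightarrow> nat set set" where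
  "h_star N k = (\<lambda>e. shift_idx N k ` e) ` pi_factor N"

end

theory Submission
  imports Defs
begin

locale nn =
  fixes N :: nat
  assumes N6: "N \<ge> 6" and Nev: "even N" and N4: "\<not> 4 dvd N"
begin

definition m where "m = N div 2"

lemma N_m: "N = 2*m" using Nev by (auto simp: m_def)
lemma m_odd: "odd m"
proof
  assume "even m" then obtain k where "m = 2*k" by auto
  then have "N = 4*k" using N_m by simp
  then show False using N4 by auto
qed
lemma m3: "m \<ge> 3" using N6 N_m by simp

abbreviation sh where "sh k w \<equiv> shift_idx N k w"

lemma sh_alt: "w \<in> {1..N} \<Longrightarrow> k < N \<Longrightarrow> sh k w = (if w + k \<le> N then w + k else w + k - N)"
  unfolding shift_idx_def
  by (auto simp: mod_if)

lemma sh_in: "sh k w \<in> {1..N}"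
  unfolding shift_idx_def using N6 by (simp add: Suc_leI)

lemma sh_sh: "sh a (sh b w) = sh (a+b) w"
proof -
  have "((w - 1 + b) mod N + a) mod N = (w - 1 + b + a) mod N" by (rule mod_add_left_eq)
  then show ?thesis unfolding shift_idx_def by (simp add: ac_simps)
qed

lemma sh_0: "w \<in> {1..N} \<Longrightarrow> sh 0 w = w"
  unfolding shift_idx_def by auto

lemma sh_N: "w \<in> {1..N} \<Longrightarrow> sh N w = w"
proof -
  assume "w \<in> {1..N}"
  then have "w - 1 + N = (w - 1) + 1 * N" "w - 1 < N" by auto
  then show ?thesis unfolding shift_idx_def using \<open>w \<in> {1..N}\<close> by (simp only: mod_mult_self1) simp
qed

lemma sh_mod: "sh (k mod N) w = sh k w"
  unfolding shift_idx_def by (simp add: mod_add_right_eq)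

lemma sh_inj: "w \<in> {1..N} \<Longrightarrow> a < N \<Longrightarrow> b < N \<Longrightarrow> sh a w = sh b w \<Longrightarrow> a = b"
  by (auto simp: sh_alt split: if_splits)


abbreviation V where "V \<equiv> {1..N}"
abbreviation diam where "diam w \<equiv> sh m w"
abbreviation fwd where "fwd w \<equiv> sh (m-1) w"
abbreviation bwd where "bwd w \<equiv> sh (m+1) w"

lemma m_lt: "m < N" "m - 1 < N" "m + 1 < N" using m3 N_m by auto

lemma diam_alt: "w \<in> V \<Longrightarrow> diam w = (if w \<le> m then w + m else w - m)"
  using sh_alt[OF _ m_lt(1)] N_m by auto
lemma fwd_alt: "w \<in> V \<Longrightarrow> fwd w = (if w \<le> m + 1 then w + m - 1 else w - m - 1)"
  using sh_alt[OF _ m_lt(2)] N_m m3 by auto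
lemma bwd_alt: "w \<in> V \<Longrightarrow> bwd w = (if w \<le> m - 1 then w + m + 1 else w + 1 - m)"
  using sh_alt[OF _ m_lt(3)] N_m m3 by auto

definition Dl :: "nat set \<Rightarrow> bool" where
  "Dl f \<longleftrightarrow> (\<exists>a. f = {a, a+m} \<and> 1 \<le> a \<and> a + m \<le> N)"
definition Ll :: "nat set \<Rightarrow> bool" where
  "Ll f \<longleftrightarrow> (\<exists>a. (f = {a, a+m-1} \<and> 1 \<le> a \<and> a+m-1 \<le> N) \<or> (f = {a, a+m+1} \<and> 1 \<le> a \<and> a+m+1 \<le> N))"

lemma Dl_diam: "w \<in> V \<Longrightarrow> Dl {w, diam w}"
proof (cases "w \<le> m")
  case True
  assume w: "w \<in> V"
  have "diam w = w + m" using True w by (simp add: diam_alt)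
  then show ?thesis unfolding Dl_def using True w N_m by auto
next
  case False
  assume w: "w \<in> V"
  have "diam w = w - m" using False w by (simp add: diam_alt)
  moreover have "w = (w - m) + m" using False by simp
  ultimately have "{w, diam w} = {w - m, (w - m) + m}" by auto
  then show ?thesis unfolding Dl_def using False w N_m by (intro exI[of _ "w - m"]) auto
qed

lemma Ll_fwd: "w \<in> V \<Longrightarrow> Ll {w, fwd w}"
proof (cases "w \<le> m + 1")
  case True
  assume w: "w \<in> V"
  have "fwd w = w + m - 1" using True fwd_alt[OF w] by simp
  then show ?thesis unfolding Ll_def using True w N_m by auto
next
  case False
  assume w: "w \<in> V"
  have "fwd w = w - m - 1" using False fwd_alt[OF w] by simp
  moreover have "w = (w - m - 1) + m + 1" using False by simp
  ultimately have "{w, fwd w} = {w - m - 1, (w - m - 1) + m + 1}" by auto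
  moreover have "1 \<le> w - m - 1" "(w - m - 1) + m + 1 \<le> N" using False w N_m by auto
  ultimately show ?thesis unfolding Ll_def by blast
qed

lemma Ll_bwd: "w \<in> V \<Longrightarrow> Ll {w, bwd w}"
proof (cases "w \<le> m - 1")
  case True
  assume w: "w \<in> V"
  have "bwd w = w + m + 1" using True bwd_alt[OF w] by simp
  then show ?thesis unfolding Ll_def using True w N_m by auto
next
  case False
  assume w: "w \<in> V"
  have "bwd w = w + 1 - m" using False bwd_alt[OF w] by simp
  moreover have "w = (w + 1 - m) + m - 1" using False m3 by simp
  ultimately have "{w, bwd w} = {w + 1 - m, (w + 1 - m) + m - 1}" by auto
  moreover have "1 \<le> w + 1 - m" "(w + 1 - m) + m - 1 \<le> N" using False w N_m m3 by auto
  ultimately show ?thesis unfolding Ll_def by blast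
qed

lemma Dl_at: "w \<in> f \<Longrightarrow> Dl f \<Longrightarrow> f = {w, diam w}"
proof -
  assume w: "w \<in> f" and "Dl f"
  then obtain a where a: "f = {a, a+m}" "1 \<le> a" "a + m \<le> N" unfolding Dl_def by blast
  show ?thesis
  proof (cases "w = a")
    case True
    then have "diam w = a + m" using a N_m by (subst diam_alt) auto
    then show ?thesis using a True by simp
  next
    case False
    then have "w = a + m" using w a by auto
    then have "diam w = a" using a N_m by (subst diam_alt) auto
    then show ?thesis using a \<open>w = a + m\<close> by auto
  qed
qed

lemma Ll_at: "w \<in> f \<Longrightarrow> Ll f \<Longrightarrow> f = {w, fwd w} \<or> f = {w, bwd w}"
proof -
  assume w: "w \<in> f" and "Ll f"
  then obtain a where a: "(f = {a, a+m-1} \<and> 1 \<le> a \<and> a+m-1 \<le> N) \<or> (f = {a, a+m+1} \<and> 1 \<le> a \<and> a+m+1 \<le> N)"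
    unfolding Ll_def by blast
  then show ?thesis
  proof
    assume h: "f = {a, a+m-1} \<and> 1 \<le> a \<and> a+m-1 \<le> N"
    show ?thesis
    proof (cases "w = a")
      case True
      then have "fwd w = a + m - 1" using h N_m m3 by (subst fwd_alt) auto
      then show ?thesis using h True by simp
    next
      case False
      then have "w = a + m - 1" using w h by auto
      then have "bwd w = a" using h N_m m3 by (subst bwd_alt) auto
      then show ?thesis using h \<open>w = a + m - 1\<close> by auto
    qed
  next
    assume h: "f = {a, a+m+1} \<and> 1 \<le> a \<and> a+m+1 \<le> N"
    show ?thesis
    proof (cases "w = a")
      case True
      then have "bwd w = a + m + 1" using h N_m m3 by (subst bwd_alt) auto
      then show ?thesis using h True by simp
    next
      case False
      then have "w = a + m + 1" using w h by auto
      then have "fwd w = a" using h N_m m3 by (subst fwd_alt) auto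
      then show ?thesis using h \<open>w = a + m + 1\<close> by auto
    qed
  qed
qed

lemma three_distinct: "w \<in> V \<Longrightarrow> diam w \<noteq> w \<and> fwd w \<noteq> w \<and> bwd w \<noteq> w \<and> diam w \<noteq> fwd w \<and> diam w \<noteq> bwd w \<and> fwd w \<noteq> bwd w"
proof -
  assume w: "w \<in> V"
  have s0: "sh 0 w = w" using sh_0 w by simp
  have "m \<noteq> 0" "m - 1 \<noteq> 0" "m + 1 \<noteq> 0" "m \<noteq> m - 1" "m \<noteq> m + 1" "m - 1 \<noteq> m + 1" using m3 by auto
  moreover have "0 < N" using N6 by simp
  ultimately show ?thesis using sh_inj[OF w] m_lt s0 by metis
qed

lemma shN2: "w \<in> V \<Longrightarrow> sh (m + m) w = w"
proof -
  have "m + m = N" using N_m by simp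
  then show "w \<in> V \<Longrightarrow> sh (m + m) w = w" using sh_N by simp
qed

lemma fwd_bwd: "w \<in> V \<Longrightarrow> fwd (bwd w) = w"
proof -
  assume "w \<in> V"
  have "m - 1 + (m + 1) = m + m" using m3 by simp
  then show ?thesis using sh_sh[of "m-1" "m+1" w] shN2 \<open>w \<in> V\<close> by simp
qed
lemma bwd_fwd: "w \<in> V \<Longrightarrow> bwd (fwd w) = w"
proof -
  assume "w \<in> V"
  have "m + 1 + (m - 1) = m + m" using m3 by simp
  then show ?thesis using sh_sh[of "m+1" "m-1" w] shN2 \<open>w \<in> V\<close> by simp
qed
lemma diam_diam: "w \<in> V \<Longrightarrow> diam (diam w) = w"
  using sh_sh[of "m" "m" w] shN2 by simp

lemma not_DL: "\<not> (Dl f \<and> Ll f)"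
  unfolding Dl_def Ll_def using m3 by (auto simp: doubleton_eq_iff)

end

lemma double_count:
  assumes "finite S" "finite F"
  shows "(\<Sum>v\<in>S. card {f\<in>F. v \<in> f}) = (\<Sum>f\<in>F. card (f \<inter> S))"
proof -
  have "(\<Sum>v\<in>S. card {f\<in>F. v \<in> f}) = (\<Sum>v\<in>S. \<Sum>f\<in>F. if v \<in> f then 1 else 0)"
    using assms by (simp add: sum.inter_filter[symmetric])
  also have "\<dots> = (\<Sum>f\<in>F. \<Sum>v\<in>S. if v \<in> f then 1 else 0)" by (rule sum.swap)
  also have "\<dots> = (\<Sum>f\<in>F. card (f \<inter> S))"
  proof (rule sum.cong[OF refl])
    fix f
    have "f \<inter> S = {v\<in>S. v \<in> f}" by auto
    then show "(\<Sum>v\<in>S. if v \<in> f then 1 else 0) = card (f \<inter> S)"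
      using assms by (simp add: sum.inter_filter[symmetric])
  qed
  finally show ?thesis .
qed

lemma crosses_sym: "crosses e f \<longleftrightarrow> crosses f e"
  unfolding crosses_def by blast

lemma crosses_irrefl: "\<not> crosses e e"
  unfolding crosses_def by (auto simp: doubleton_eq_iff)

lemma crosses_char:
  assumes "i < j"
  shows "crosses {i,j} {a,b} \<longleftrightarrow> (i<a \<and> a<j \<and> (b<i \<or> j<b)) \<or> (i<b \<and> b<j \<and> (a<i \<or> j<a))"
proof
  assume "crosses {i,j} {a,b}"
  then obtain i' j' k l where h: "{i,j} = {i',j'}" "{a,b} = {k,l}" "i'<j'" "k<l"
    "(i' < k \<and> k < j' \<and> j' < l) \<or> (k < i' \<and> i' < l \<and> l < j')"
    unfolding crosses_def by blast
  have "i' = i \<and> j' = j" using h(1,3) assms by (auto simp: doubleton_eq_iff)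
  then show "(i<a \<and> a<j \<and> (b<i \<or> j<b)) \<or> (i<b \<and> b<j \<and> (a<i \<or> j<a))"
    using h(2,4,5) by (auto simp: doubleton_eq_iff)
next
  assume h: "(i<a \<and> a<j \<and> (b<i \<or> j<b)) \<or> (i<b \<and> b<j \<and> (a<i \<or> j<a))"
  show "crosses {i,j} {a,b}"
    unfolding crosses_def
  proof -
    have "a < b \<or> b < a" using h by auto
    then show "\<exists>i' j' k l. {i, j} = {i', j'} \<and> {a, b} = {k, l} \<and> i' < j' \<and> k < l \<and>
      (i' < k \<and> k < j' \<and> j' < l \<or> k < i' \<and> i' < l \<and> l < j')"
    proof
      assume "a < b"
      then show ?thesis using h assms
        by (intro exI[of _ i] exI[of _ j] exI[of _ a] exI[of _ b]) auto
    next
      assume "b < a"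
      then show ?thesis using h assms
        by (intro exI[of _ i] exI[of _ j] exI[of _ b] exI[of _ a]) (auto simp: insert_commute)
    qed
  qed
qed

lemma two_sum_pairs:
  assumes fin: "finite F" and sym: "\<And>e f. R e f \<Longrightarrow> R f e" and irr: "\<And>e. \<not> R e e"
  shows "(\<Sum>e\<in>F. card {f\<in>F. R e f}) = 2 * card {{e, f} | e f. e \<in> F \<and> f \<in> F \<and> R e f}"
proof -
  let ?P = "{{e, f} | e f. e \<in> F \<and> f \<in> F \<and> R e f}"
  let ?Q = "Sigma F (\<lambda>e. {f\<in>F. R e f})"
  let ?A = "\<lambda>p. {q\<in>?Q. p = {fst q, snd q}}"
  have "(\<Sum>e\<in>F. card {f\<in>F. R e f}) = card ?Q" using fin by (simp add: card_SigmaI)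
  also have "?Q = (\<Union>p\<in>?P. ?A p)" by (auto; blast)
  also have "card (\<Union>p\<in>?P. ?A p) = (\<Sum>p\<in>?P. card (?A p))"
  proof (rule card_UN_disjoint)
    have "?P \<subseteq> (\<lambda>(e,f). {e,f}) ` (F \<times> F)" by auto
    moreover have "finite ((\<lambda>(e,f). {e,f}) ` (F \<times> F))" using fin by simp
    ultimately show "finite ?P" by (rule finite_subset)
    have "\<And>p. ?A p \<subseteq> F \<times> F" by auto
    then show "\<forall>p\<in>?P. finite (?A p)" using fin by (meson finite_SigmaI finite_subset)
    show "\<forall>p\<in>?P. \<forall>p'\<in>?P. p \<noteq> p' \<longrightarrow> ?A p \<inter> ?A p' = {}" by blast
  qed
  also have "\<dots> = (\<Sum>p\<in>?P. 2)"
  proof (rule sum.cong[OF refl])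
    fix p assume "p \<in> ?P"
    then obtain e f where ef: "p = {e,f}" "e \<in> F" "f \<in> F" "R e f" by blast
    have "e \<noteq> f" using ef irr by auto
    have "?A p = {(e,f),(f,e)}" using ef sym by (auto simp: doubleton_eq_iff)
    then show "card (?A p) = 2" using \<open>e \<noteq> f\<close> by simp
  qed
  finally show ?thesis by simp
qed

lemma crossings_sum:
  assumes "finite F"
  shows "2 * crossings F = (\<Sum>e\<in>F. card {f\<in>F. crosses e f})"
  unfolding crossings_def
  using two_sum_pairs[OF assms, of crosses] crosses_sym crosses_irrefl by metis

context nn begin

lemma tf_edges: "two_factor N F \<Longrightarrow> f \<in> F \<Longrightarrow> \<exists>a b. f = {a,b} \<and> a \<in> V \<and> b \<in> V \<and> a < b"
proof -
  assume "two_factor N F" "f \<in> F"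
  then obtain i j where ij: "f = {i,j}" "i \<in> V" "j \<in> V" "i \<noteq> j"
    unfolding two_factor_def by blast
  show ?thesis
  proof (cases "i < j")
    case True then show ?thesis using ij by blast
  next
    case False
    then have "j < i" using ij by simp
    moreover have "f = {j, i}" using ij by (simp add: insert_commute)
    ultimately show ?thesis using ij by blast
  qed
qed

lemma tf_finite: "two_factor N F \<Longrightarrow> finite F"
proof -
  assume "two_factor N F"
  then have "F \<subseteq> Pow V" using tf_edges by fastforce
  then show "finite F" by (rule finite_subset) simp
qed

lemma tf_card_edge: "two_factor N F \<Longrightarrow> f \<in> F \<Longrightarrow> card f = 2 \<and> f \<subseteq> V"
  using tf_edges by fastforce

lemma tf_deg: "two_factor N F \<Longrightarrow> v \<in> V \<Longrightarrow> card {f\<in>F. v \<in> f} = 2"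
  unfolding two_factor_def by blast

lemma tf_card: "two_factor N F \<Longrightarrow> card F = N"
proof -
  assume tf: "two_factor N F"
  have "(\<Sum>v\<in>V. card {f\<in>F. v \<in> f}) = (\<Sum>f\<in>F. card (f \<inter> V))"
    using double_count[of V F] tf_finite[OF tf] by simp
  moreover have "(\<Sum>v\<in>V. card {f\<in>F. v \<in> f}) = 2 * N" using tf_deg[OF tf] by simp
  moreover have "(\<Sum>f\<in>F. card (f \<inter> V)) = 2 * card F"
  proof -
    have "(\<Sum>f\<in>F. card (f \<inter> V)) = (\<Sum>f\<in>F. 2)"
      using tf_card_edge[OF tf] by (intro sum.cong) (auto simp: Int_absorb2)
    then show ?thesis by simp
  qed
  ultimately show ?thesis by simp
qed

end

context nn begin

definition CR :: "nat set set \<Rightarrow> nat set \<Rightarrow> nat set set" where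
  "CR F e = {f\<in>F. crosses e f}"

definition In :: "nat \<Rightarrow> nat \<Rightarrow> nat set" where "In i j = {i<..<j}"
definition Out :: "nat \<Rightarrow> nat \<Rightarrow> nat set" where "Out i j = V - {i..j}"

lemma card_In: "card (In i j) = j - i - 1" unfolding In_def by simp
lemma card_Out: "i \<in> V \<Longrightarrow> j \<in> V \<Longrightarrow> i < j \<Longrightarrow> card (Out i j) = N - (j - i) - 1"
proof -
  assume h: "i \<in> V" "j \<in> V" "i < j"
  have "Out i j = {1..<i} \<union> {j<..N}" unfolding Out_def using h by auto
  moreover have "card ({1..<i} \<union> {j<..N}) = (i - 1) + (N - j)"
    using h by (subst card_Un_disjoint) auto
  ultimately show ?thesis using h by simp
qed

lemma cross_io:
  assumes "i < j" "a \<in> V" "b \<in> V" "a \<noteq> b"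
  shows "crosses {i,j} {a,b} \<longleftrightarrow> (a \<in> In i j \<and> b \<in> Out i j) \<or> (b \<in> In i j \<and> a \<in> Out i j)"
  unfolding crosses_char[OF assms(1)] In_def Out_def using assms by auto

lemma CR_card1:
  assumes tf: "two_factor N F" and ij: "i < j" and f: "f \<in> CR F {i,j}"
  shows "card (f \<inter> In i j) = 1" "card (f \<inter> Out i j) = 1" "i \<notin> f" "j \<notin> f"
proof -
  have fF: "f \<in> F" and cr: "crosses {i,j} f" using f unfolding CR_def by auto
  obtain a b where ab: "f = {a,b}" "a \<in> V" "b \<in> V" "a < b" using tf_edges[OF tf fF] by blast
  have io: "(a \<in> In i j \<and> b \<in> Out i j) \<or> (b \<in> In i j \<and> a \<in> Out i j)"
    using cr cross_io[OF ij ab(2,3)] ab by auto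
  have disj: "In i j \<inter> Out i j = {}" "i \<notin> In i j" "j \<notin> In i j" "i \<notin> Out i j" "j \<notin> Out i j"
    unfolding In_def Out_def using ij by auto
  from io show "card (f \<inter> In i j) = 1"
  proof
    assume h: "a \<in> In i j \<and> b \<in> Out i j"
    then have "f \<inter> In i j = {a}" using ab disj by auto
    then show ?thesis by simp
  next
    assume h: "b \<in> In i j \<and> a \<in> Out i j"
    then have "f \<inter> In i j = {b}" using ab disj by auto
    then show ?thesis by simp
  qed
  from io show "card (f \<inter> Out i j) = 1"
  proof
    assume h: "a \<in> In i j \<and> b \<in> Out i j"
    then have "f \<inter> Out i j = {b}" using ab disj by auto
    then show ?thesis by simp
  next
    assume h: "b \<in> In i j \<and> a \<in> Out i j"
    then have "f \<inter> Out i j = {a}" using ab disj by auto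
    then show ?thesis by simp
  qed
  show "i \<notin> f" "j \<notin> f" using io ab disj by auto
qed

lemma side_eq:
  assumes tf: "two_factor N F" and SV: "S \<subseteq> V" and c1: "\<And>f. f \<in> CR F e \<Longrightarrow> card (f \<inter> S) = 1"
  shows "card (CR F e) + (\<Sum>f\<in>F - CR F e. card (f \<inter> S)) = 2 * card S"
proof -
  have fin: "finite F" using tf_finite[OF tf] .
  have finS: "finite S" using SV finite_subset by blast
  have "(\<Sum>v\<in>S. card {f\<in>F. v \<in> f}) = (\<Sum>f\<in>F. card (f \<inter> S))"
    using double_count[OF finS fin] .
  moreover have "(\<Sum>v\<in>S. card {f\<in>F. v \<in> f}) = 2 * card S"
    using tf_deg[OF tf] SV by (simp add: subset_iff)
  moreover have "(\<Sum>f\<in>F. card (f \<inter> S)) = (\<Sum>f\<in>CR F e. card (f \<inter> S)) + (\<Sum>f\<in>F - CR F e. card (f \<inter> S))"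
    using fin by (metis (no_types, lifting) CR_def add.commute mem_Collect_eq subsetI sum.subset_diff)
  moreover have "(\<Sum>f\<in>CR F e. card (f \<inter> S)) = card (CR F e)"
    using c1 by simp
  ultimately show ?thesis by simp
qed

lemma side_In:
  assumes tf: "two_factor N F" and ij: "i < j" "i \<in> V" "j \<in> V"
  shows "card (CR F {i,j}) + (\<Sum>f\<in>F - CR F {i,j}. card (f \<inter> In i j)) = 2 * (j - i - 1)"
proof -
  have "In i j \<subseteq> V" using ij unfolding In_def by auto
  then show ?thesis using side_eq[OF tf, of "In i j" "{i,j}"] CR_card1[OF tf ij(1)] card_In ij by auto
qed

lemma side_Out:
  assumes tf: "two_factor N F" and ij: "i < j" "i \<in> V" "j \<in> V"
  shows "card (CR F {i,j}) + (\<Sum>f\<in>F - CR F {i,j}. card (f \<inter> Out i j)) = 2 * (N - (j - i) - 1)"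
proof -
  have "Out i j \<subseteq> V" unfolding Out_def by auto
  then show ?thesis using side_eq[OF tf, of "Out i j" "{i,j}"] CR_card1[OF tf ij(1)] card_Out[OF ij(2,3,1)] by auto
qed


lemma Dl_ij: "i < j \<Longrightarrow> Dl {i,j} \<longleftrightarrow> (j = i + m \<and> 1 \<le> i \<and> j \<le> N)"
  unfolding Dl_def by (auto simp: doubleton_eq_iff)

lemma Ll_ij: "i < j \<Longrightarrow> Ll {i,j} \<longleftrightarrow> ((j = i + m - 1 \<or> j = i + m + 1) \<and> 1 \<le> i \<and> j \<le> N)"
  unfolding Ll_def using m3 by (auto simp: doubleton_eq_iff)

lemma other_edge:
  assumes tf: "two_factor N F" and e: "e \<in> F" and v: "v \<in> e"
  shows "\<exists>g\<in>F. v \<in> g \<and> g \<noteq> e"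
proof (rule ccontr)
  assume "\<not> ?thesis"
  then have "{f\<in>F. v \<in> f} = {e}" using e v by blast
  moreover have "v \<in> V" using tf_card_edge[OF tf e] v by auto
  ultimately show False using tf_deg[OF tf] by fastforce
qed

lemma other_end:
  assumes tf: "two_factor N F" and g: "g \<in> F" and v: "v \<in> g"
  obtains w where "g = {v, w}" "w \<in> V" "w \<noteq> v"
proof -
  obtain a b where ab: "g = {a,b}" "a \<in> V" "b \<in> V" "a < b" using tf_edges[OF tf g] by blast
  show ?thesis
  proof (cases "v = a")
    case True then show ?thesis using that ab by auto
  next
    case False then have "v = b" using v ab by auto
    then show ?thesis using that[of a] ab by (auto simp: insert_commute)
  qed
qed

lemma extra1:
  assumes tf: "two_factor N F" and g: "g \<in> F - CR F e" and S: "w \<in> g" "w \<in> S" "finite S"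
  shows "1 \<le> (\<Sum>f\<in>F - CR F e. card (f \<inter> S))"
proof -
  have "finite (F - CR F e)" using tf_finite[OF tf] by simp
  moreover have "0 < card (g \<inter> S)"
    by (rule card_gt_0_iff[THEN iffD2]) (use S in blast)
  ultimately show ?thesis using member_le_sum[OF g, of "\<lambda>f. card (f \<inter> S)"] g by simp
qed

lemma extra2:
  assumes tf: "two_factor N F" and g: "g1 \<in> F - CR F e" "g2 \<in> F - CR F e" "g1 \<noteq> g2"
   and S: "w1 \<in> g1" "w1 \<in> S" "w2 \<in> g2" "w2 \<in> S" "finite S"
  shows "2 \<le> (\<Sum>f\<in>F - CR F e. card (f \<inter> S))"
proof -
  have fin: "finite (F - CR F e)" using tf_finite[OF tf] by simp
  have "0 < card (g1 \<inter> S)"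
    by (rule card_gt_0_iff[THEN iffD2]) (use S in blast)
  moreover have "0 < card (g2 \<inter> S)"
    by (rule card_gt_0_iff[THEN iffD2]) (use S in blast)
  ultimately have "2 \<le> (\<Sum>f\<in>{g1,g2}. card (f \<inter> S))" using g(3) by simp
  also have "\<dots> \<le> (\<Sum>f\<in>F - CR F e. card (f \<inter> S))"
    using g fin by (intro sum_mono2) auto
  finally show ?thesis .
qed

lemma In_Out_cover: "w \<in> V \<Longrightarrow> w \<noteq> i \<Longrightarrow> w \<noteq> j \<Longrightarrow> i < j \<Longrightarrow> w \<in> In i j \<or> w \<in> Out i j"
  unfolding In_def Out_def by auto

lemma fin_In: "finite (In i j)" unfolding In_def by simp
lemma fin_Out: "finite (Out i j)" unfolding Out_def by simp

lemma diam_edge_info: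
  assumes tf: "two_factor N F" and e: "{i,j} \<in> F" and ij: "i < j" "i \<in> V" "j \<in> V" and v: "v = i \<or> v = j"
  obtains g w where "g \<in> F - CR F {i,j}" "g = {v,w}" "v \<in> g" "w \<in> g" "w \<in> In i j \<or> w \<in> Out i j" "g \<noteq> {i,j}"
proof -
  obtain g where g: "g \<in> F" "v \<in> g" "g \<noteq> {i,j}" using other_edge[OF tf e] v by blast
  obtain w where w: "g = {v,w}" "w \<in> V" "w \<noteq> v" using other_end[OF tf g(1,2)] by blast
  have "w \<noteq> i" "w \<noteq> j" using w g v by auto
  then have io: "w \<in> In i j \<or> w \<in> Out i j" using In_Out_cover w ij by blast
  have "g \<notin> CR F {i,j}" using CR_card1(3,4)[OF tf ij(1)] g v by blast
  then show ?thesis using that g w io by blast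
qed

lemma bound_Dl:
  assumes tf: "two_factor N F" and e: "{i,j} \<in> F" and ij: "i < j" "i \<in> V" "j \<in> V" "j = i + m"
  shows "card (CR F {i,j}) \<le> N - 3"
proof -
  obtain g w where gw: "g \<in> F - CR F {i,j}" "w \<in> g" "w \<in> In i j \<or> w \<in> Out i j"
    using diam_edge_info[OF tf e ij(1-3)] by blast
  have c1: "card (In i j) = m - 1" "card (Out i j) = m - 1" using card_In card_Out ij N_m by auto
  from gw(3) show ?thesis
  proof
    assume "w \<in> In i j"
    then have "1 \<le> (\<Sum>f\<in>F - CR F {i,j}. card (f \<inter> In i j))" using extra1[OF tf gw(1,2)] fin_In by blast
    then show ?thesis using side_In[OF tf ij(1-3)] ij N_m by simp
  next
    assume "w \<in> Out i j"
    then have "1 \<le> (\<Sum>f\<in>F - CR F {i,j}. card (f \<inter> Out i j))" using extra1[OF tf gw(1,2)] fin_Out by blast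
    then show ?thesis using side_Out[OF tf ij(1-3)] ij N_m by simp
  qed
qed

lemma tight_Dl:
  assumes tf: "two_factor N F" and e: "{i,j} \<in> F" and ij: "i < j" "i \<in> V" "j \<in> V" "j = i + m"
    and tight: "card (CR F {i,j}) = N - 3"
    and g1: "{i,w1} \<in> F" "w1 \<noteq> j" and g2: "{j,w2} \<in> F" "w2 \<noteq> i"
  shows "\<not> (w1 \<in> In i j \<and> w2 \<in> In i j) \<and> \<not> (w1 \<in> Out i j \<and> w2 \<in> Out i j)"
proof -
  have n1: "{i,w1} \<notin> CR F {i,j}" "{j,w2} \<notin> CR F {i,j}" using CR_card1(3,4)[OF tf ij(1)] by blast+
  have ne: "{i,w1} \<noteq> {j,w2}" using ij g1 g2 by (auto simp: doubleton_eq_iff)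
  show ?thesis
  proof (intro conjI notI)
    assume "w1 \<in> In i j \<and> w2 \<in> In i j"
    then have "2 \<le> (\<Sum>f\<in>F - CR F {i,j}. card (f \<inter> In i j))"
      using extra2[OF tf _ _ ne, of "{i,j}" w1 "In i j" w2] n1 g1 g2 fin_In by blast
    then show False using side_In[OF tf ij(1-3)] ij N_m tight m3 by simp
  next
    assume "w1 \<in> Out i j \<and> w2 \<in> Out i j"
    then have "2 \<le> (\<Sum>f\<in>F - CR F {i,j}. card (f \<inter> Out i j))"
      using extra2[OF tf _ _ ne, of "{i,j}" w1 "Out i j" w2] n1 g1 g2 fin_Out by blast
    then show False using side_Out[OF tf ij(1-3)] ij N_m tight m3 by simp
  qed
qed

definition bnd :: "nat set \<Rightarrow> nat" where
  "bnd e = (if Dl e then N - 3 else if Ll e then N - 4 else N - 6)"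

lemma bound_all:
  assumes tf: "two_factor N F" and e: "e \<in> F"
  shows "card (CR F e) \<le> bnd e"
proof -
  obtain i j where ij: "e = {i,j}" "i \<in> V" "j \<in> V" "i < j" using tf_edges[OF tf e] by blast
  have sI: "card (CR F e) \<le> 2 * (j - i - 1)" using side_In[OF tf ij(4,2,3)] ij(1) by simp
  have sO: "card (CR F e) \<le> 2 * (N - (j - i) - 1)" using side_Out[OF tf ij(4,2,3)] ij(1) by simp
  show ?thesis
  proof (cases "Dl e")
    case True
    then have "j = i + m" using Dl_ij[OF ij(4)] ij by simp
    then show ?thesis using bound_Dl[OF tf _ ij(4,2,3)] e ij True unfolding bnd_def by simp
  next
    case False
    note nD = this
    show ?thesis
    proof (cases "Ll e")
      case True
      then have "j = i + m - 1 \<or> j = i + m + 1" using Ll_ij[OF ij(4)] ij by simp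
      then show ?thesis using sI sO nD True N_m m3 unfolding bnd_def by auto
    next
      case False
      have "j \<noteq> i + m" "j \<noteq> i + m - 1" "j \<noteq> i + m + 1"
        using nD False Dl_ij[OF ij(4)] Ll_ij[OF ij(4)] ij by auto
      then have "j - i \<le> m - 2 \<or> j - i \<ge> m + 2" using ij m3 by linarith
      then show ?thesis using sI sO nD False N_m m3 ij unfolding bnd_def by auto
    qed
  qed
qed

end

context nn begin

definition Ds :: "nat set set \<Rightarrow> nat set set" where "Ds F = {e\<in>F. Dl e}"
definition Os :: "nat set set \<Rightarrow> nat set set" where "Os F = {e\<in>F. \<not> Dl e \<and> \<not> Ll e}"

lemma upper:
  assumes tf: "two_factor N F"
  shows "2 * crossings F + 2 * card (Os F) \<le> N * (N - 4) + card (Ds F)"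
proof -
  have fin: "finite F" using tf_finite[OF tf] .
  have "2 * crossings F = (\<Sum>e\<in>F. card (CR F e))" using crossings_sum[OF fin] unfolding CR_def by simp
  also have "\<dots> \<le> (\<Sum>e\<in>F. bnd e)" using bound_all[OF tf] by (intro sum_mono) auto
  finally have 1: "2 * crossings F \<le> (\<Sum>e\<in>F. bnd e)" .
  have "(\<Sum>e\<in>F. bnd e + (if \<not> Dl e \<and> \<not> Ll e then 2 else 0)) = (\<Sum>e\<in>F. (N - 4) + (if Dl e then 1 else 0))"
    using N6 by (intro sum.cong) (auto simp: bnd_def)
  moreover have "(\<Sum>e\<in>F. bnd e + (if \<not> Dl e \<and> \<not> Ll e then 2 else 0)) = (\<Sum>e\<in>F. bnd e) + 2 * card (Os F)"
    using fin by (simp add: sum.distrib sum.If_cases Os_def Int_def)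
  moreover have "(\<Sum>e\<in>F. (N - 4) + (if Dl e then 1 else 0)) = N * (N - 4) + card (Ds F)"
    using fin tf_card[OF tf] by (simp add: sum.distrib sum.If_cases Ds_def Int_def)
  ultimately show ?thesis using 1 by linarith
qed

lemma Dl_min: "Dl e \<Longrightarrow> e = {Min e, Min e + m} \<and> Min e \<in> {1..m}"
proof -
  assume "Dl e"
  then obtain a where a: "e = {a, a+m}" "1 \<le> a" "a + m \<le> N" unfolding Dl_def by blast
  then have "Min e = a" by simp
  then show ?thesis using a N_m by auto
qed

lemma Ds_le: "finite F \<Longrightarrow> card (Ds F) \<le> m"
proof -
  have "inj_on Min (Ds F)"
    by (rule inj_onI) (metis Dl_min Ds_def mem_Collect_eq)
  moreover have "Min ` Ds F \<subseteq> {1..m}" using Dl_min unfolding Ds_def by auto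
  ultimately show "card (Ds F) \<le> m" using card_inj_on_le[of Min "Ds F" "{1..m}"] by simp
qed

lemma Ds_image: "finite F \<Longrightarrow> card (Min ` Ds F) = card (Ds F)"
proof -
  have "inj_on Min (Ds F)"
    by (rule inj_onI) (metis Dl_min Ds_def mem_Collect_eq)
  then show ?thesis by (simp add: card_image)
qed

lemma Ds_mem: "a \<in> Min ` Ds F \<longleftrightarrow> a \<in> {1..m} \<and> {a, a+m} \<in> F"
proof
  assume "a \<in> Min ` Ds F"
  then obtain e where "e \<in> F" "Dl e" "a = Min e" unfolding Ds_def by auto
  then show "a \<in> {1..m} \<and> {a, a+m} \<in> F" using Dl_min by metis
next
  assume h: "a \<in> {1..m} \<and> {a, a+m} \<in> F"
  then have "Dl {a,a+m}" unfolding Dl_def using N_m by auto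
  moreover have "Min {a, a+m} = a" by simp
  ultimately show "a \<in> Min ` Ds F" using h unfolding Ds_def by (metis (mono_tags, lifting) image_eqI mem_Collect_eq)
qed

lemma tight_opt:
  assumes tf: "two_factor N F" and big: "N * (N - 4) + m - 1 \<le> 2 * crossings F"
  shows "Os F = {} \<and> card (Ds F) \<ge> m - 1"
    "card (Ds F) = m - 1 \<Longrightarrow> \<forall>e\<in>F. card (CR F e) = bnd e"
proof -
  have fin: "finite F" using tf_finite[OF tf] .
  have u: "2 * crossings F + 2 * card (Os F) \<le> N * (N - 4) + card (Ds F)" using upper[OF tf] .
  have d: "card (Ds F) \<le> m" using Ds_le[OF fin] .
  have "card (Os F) = 0" using u d big m3 by linarith
  moreover have "finite (Os F)" using fin unfolding Os_def by simp
  ultimately show "Os F = {} \<and> card (Ds F) \<ge> m - 1" using u d big m3 by auto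
  assume dm: "card (Ds F) = m - 1"
  show "\<forall>e\<in>F. card (CR F e) = bnd e"
  proof (rule ccontr)
    assume "\<not> ?thesis"
    then obtain e where e: "e \<in> F" "card (CR F e) \<noteq> bnd e" by blast
    then have "card (CR F e) < bnd e" using bound_all[OF tf e(1)] by simp
    then have "(\<Sum>e\<in>F. card (CR F e)) < (\<Sum>e\<in>F. bnd e)"
      using fin bound_all[OF tf] e(1) by (intro sum_strict_mono_ex1) auto
    moreover have "2 * crossings F = (\<Sum>e\<in>F. card (CR F e))" using crossings_sum[OF fin] unfolding CR_def by simp
    moreover have "(\<Sum>e\<in>F. bnd e) \<le> N * (N - 4) + card (Ds F)"
    proof -
      have "(\<Sum>e\<in>F. bnd e) = (\<Sum>e\<in>F. (N - 4) + (if Dl e then 1 else 0))"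
        using N6 \<open>card (Os F) = 0\<close> \<open>finite (Os F)\<close> unfolding Os_def
        by (intro sum.cong) (auto simp: bnd_def)
      also have "\<dots> = N * (N - 4) + card (Ds F)"
        using fin tf_card[OF tf] by (simp add: sum.distrib sum.If_cases Ds_def Int_def)
      finally show ?thesis by simp
    qed
    ultimately show False using big dm m3 by linarith
  qed
qed

end

context nn begin

lemma edges_at:
  assumes tf: "two_factor N F" and O: "Os F = {}" and w: "w \<in> V"
  shows "{f\<in>F. w \<in> f} = {f\<in>{{w, diam w}, {w, fwd w}, {w, bwd w}}. f \<in> F}"
proof (rule set_eqI, rule iffI)
  fix f assume f: "f \<in> {f\<in>F. w \<in> f}"
  then have "Dl f \<or> Ll f" using O unfolding Os_def by auto
  then show "f \<in> {f\<in>{{w, diam w}, {w, fwd w}, {w, bwd w}}. f \<in> F}"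
    using Dl_at Ll_at f by auto
qed auto

lemma card_filter_sum: "finite X \<Longrightarrow> card {f\<in>X. P f} = (\<Sum>f\<in>X. if P f then 1 else 0)"
  by (simp add: sum.inter_filter[symmetric])

lemma deg_formula:
  assumes tf: "two_factor N F" and O: "Os F = {}" and w: "w \<in> V"
  shows "(if {w, diam w} \<in> F then 1 else 0) + (if {w, fwd w} \<in> F then 1 else 0) + (if {w, bwd w} \<in> F then 1 else (0::nat)) = 2"
proof -
  have d: "{w, diam w} \<noteq> {w, fwd w}" "{w, diam w} \<noteq> {w, bwd w}" "{w, fwd w} \<noteq> {w, bwd w}"
    using three_distinct[OF w] by (auto simp: doubleton_eq_iff)
  have "card {f\<in>{{w, diam w}, {w, fwd w}, {w, bwd w}}. f \<in> F} = 2"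
    using edges_at[OF tf O w] tf_deg[OF tf w] by simp
  moreover have "card {f\<in>{{w, diam w}, {w, fwd w}, {w, bwd w}}. f \<in> F} =
     (if {w, diam w} \<in> F then 1 else 0) + (if {w, fwd w} \<in> F then 1 else 0) + (if {w, bwd w} \<in> F then 1 else (0::nat))"
    by (subst card_filter_sum) (use d in simp_all)
  ultimately show ?thesis by simp
qed

lemma diam_in_F: "w \<in> V \<Longrightarrow> {w, diam w} \<in> F \<longleftrightarrow> (if w \<le> m then w else w - m) \<in> Min ` Ds F"
proof -
  assume w: "w \<in> V"
  show ?thesis
  proof (cases "w \<le> m")
    case True
    then have "diam w = w + m" using diam_alt[OF w] by simp
    then show ?thesis using True w Ds_mem by auto
  next
    case False
    then have "diam w = w - m" using diam_alt[OF w] by simp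
    moreover have "{w, w - m} = {w - m, w - m + m}" using False by auto
    ultimately show ?thesis using False w N_m Ds_mem[of "w - m" F] by auto
  qed
qed

lemma card_evens: "card {w\<in>{1..2*k}. even w} = (k::nat)"
proof -
  have "{w\<in>{1..2*k}. even w} = (\<lambda>x. 2*x) ` {1..k}" by (auto elim!: evenE)
  moreover have "inj_on (\<lambda>x::nat. 2*x) {1..k}" by (auto intro: inj_onI)
  ultimately show ?thesis by (simp add: card_image)
qed

lemma not_Dm:
  assumes tf: "two_factor N F" and O: "Os F = {}" and D: "card (Ds F) = m"
  shows False
proof -
  have fin: "finite F" using tf_finite[OF tf] .
  have M: "Min ` Ds F = {1..m}"
  proof (rule card_subset_eq)
    show "Min ` Ds F \<subseteq> {1..m}" by (meson Ds_mem subsetI)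
    show "card (Min ` Ds F) = card {1..m}" using Ds_image[OF fin] D by simp
  qed simp
  have alld: "\<And>w. w \<in> V \<Longrightarrow> {w, diam w} \<in> F" using diam_in_F M N_m by auto
  let ?FL = "{f\<in>F. Ll f}"
  let ?E = "{w\<in>V. even w}"
  have one: "card {f\<in>?FL. w \<in> f} = 1" if w: "w \<in> V" for w
  proof -
    have df: "(if {w, fwd w} \<in> F then 1 else 0) + (if {w, bwd w} \<in> F then 1 else (0::nat)) = 1"
      using deg_formula[OF tf O w] alld[OF w] by simp
    have "{f\<in>?FL. w \<in> f} = {f \<in> {f\<in>F. w \<in> f}. Ll f}" by auto
    also have "\<dots> = {f\<in>{{w, diam w}, {w, fwd w}, {w, bwd w}}. f \<in> F \<and> Ll f}"
      unfolding edges_at[OF tf O w] by auto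
    finally have eq: "{f\<in>?FL. w \<in> f} = {f\<in>{{w, diam w}, {w, fwd w}, {w, bwd w}}. f \<in> F \<and> Ll f}" .
    have d: "{w, diam w} \<noteq> {w, fwd w}" "{w, diam w} \<noteq> {w, bwd w}" "{w, fwd w} \<noteq> {w, bwd w}"
      using three_distinct[OF w] by (auto simp: doubleton_eq_iff)
    have "\<not> Ll {w, diam w}" using not_DL Dl_diam[OF w] by blast
    then show ?thesis unfolding eq by (subst card_filter_sum) (use d df Ll_fwd[OF w] Ll_bwd[OF w] in simp_all)
  qed
  have finFL: "finite ?FL" using fin by simp
  have "(\<Sum>w\<in>?E. card {f\<in>?FL. w \<in> f}) = (\<Sum>f\<in>?FL. card (f \<inter> ?E))"
    by (rule double_count) (use finFL in auto)
  moreover have "(\<Sum>w\<in>?E. card {f\<in>?FL. w \<in> f}) = m"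
    using one card_evens[of m] N_m by simp
  moreover have "even (\<Sum>f\<in>?FL. card (f \<inter> ?E))"
  proof (rule dvd_sum)
    fix f assume f: "f \<in> ?FL"
    then obtain a where a: "(f = {a, a+m-1} \<and> 1 \<le> a \<and> a+m-1 \<le> N) \<or> (f = {a, a+m+1} \<and> 1 \<le> a \<and> a+m+1 \<le> N)"
      unfolding Ll_def by auto
    have ev1: "even (m - 1)" "even (m + 1)" using m_odd m3 by auto
    from a obtain b where b: "f = {a, b}" "b \<noteq> a" "a \<in> V" "b \<in> V" "even a \<longleftrightarrow> even b"
    proof
      assume h: "f = {a, a+m-1} \<and> 1 \<le> a \<and> a+m-1 \<le> N"
      have "even a \<longleftrightarrow> even (a + (m - 1))" using ev1 by simp
      moreover have "a + (m - 1) = a + m - 1" using m3 by simp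
      ultimately have e: "even a \<longleftrightarrow> even (a + m - 1)" by metis
      have "a + m - 1 \<noteq> a" "a \<in> V" "a + m - 1 \<in> V" using h m3 by auto
      then show ?thesis using h e by (intro that[of "a+m-1"]) auto
    next
      assume h: "f = {a, a+m+1} \<and> 1 \<le> a \<and> a+m+1 \<le> N"
      have "even a \<longleftrightarrow> even (a + (m + 1))" using ev1 by simp
      moreover have "a + (m + 1) = a + m + 1" by simp
      ultimately have e: "even a \<longleftrightarrow> even (a + m + 1)" by metis
      have "a + m + 1 \<noteq> a" "a \<in> V" "a + m + 1 \<in> V" using h m3 by auto
      then show ?thesis using h e by (intro that[of "a+m+1"]) auto
    qed
    show "2 dvd card (f \<inter> ?E)"
    proof (cases "even a")
      case True
      then have "f \<inter> ?E = {a, b}" using b by auto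
      then show ?thesis using b by simp
    next
      case False
      then have "f \<inter> ?E = {}" using b by auto
      then show ?thesis by simp
    qed
  qed
  ultimately show False using m_odd by simp
qed

end

context nn begin

lemma pos:
  assumes i: "i \<in> V" "i \<le> m"
  shows "fwd i \<in> In i (i+m)" "bwd i \<in> Out i (i+m)" "fwd (i+m) \<in> Out i (i+m)" "bwd (i+m) \<in> In i (i+m)"
proof -
  have j: "i + m \<in> V" using i N_m by auto
  show "fwd i \<in> In i (i+m)" using fwd_alt[OF i(1)] i m3 unfolding In_def by auto
  show "bwd i \<in> Out i (i+m)"
  proof (cases "i \<le> m - 1")
    case True then show ?thesis using bwd_alt[OF i(1)] i m3 N_m unfolding Out_def by auto
  next
    case False then have "i = m" using i by simp
    then show ?thesis using bwd_alt[OF i(1)] i m3 N_m unfolding Out_def by auto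
  qed
  show "fwd (i+m) \<in> Out i (i+m)"
  proof (cases "i = 1")
    case True then show ?thesis using fwd_alt[OF j] i m3 N_m unfolding Out_def by auto
  next
    case False then show ?thesis using fwd_alt[OF j] i m3 N_m unfolding Out_def by auto
  qed
  show "bwd (i+m) \<in> In i (i+m)" using bwd_alt[OF j] i m3 unfolding In_def by auto
qed

definition tt :: "nat set set \<Rightarrow> nat \<Rightarrow> bool" where "tt F w \<longleftrightarrow> {w, fwd w} \<in> F"

definition Str :: "nat \<Rightarrow> nat set set \<Rightarrow> bool" where
  "Str u F \<longleftrightarrow> u \<in> V \<and> two_factor N F \<and> Os F = {} \<and>
     (\<forall>w\<in>V. {w, diam w} \<in> F \<longleftrightarrow> (w \<noteq> u \<and> w \<noteq> diam u)) \<and>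
     (\<forall>w\<in>V. w \<noteq> u \<and> w \<noteq> diam u \<longrightarrow> ({w, bwd w} \<in> F \<longleftrightarrow> \<not> tt F w)) \<and>
     tt F u \<and> {u, bwd u} \<in> F \<and> tt F (diam u) \<and> {diam u, bwd (diam u)} \<in> F \<and>
     (\<forall>w\<in>V. w \<noteq> u \<and> w \<noteq> diam u \<longrightarrow> (tt F w \<longleftrightarrow> tt F (diam w)))"

lemma excl:
  assumes tf: "two_factor N F" and O: "Os F = {}" and w: "w \<in> V" and d: "{w, diam w} \<in> F"
  shows "{w, bwd w} \<in> F \<longleftrightarrow> \<not> tt F w"
proof -
  have "(if tt F w then 1 else 0) + (if {w, bwd w} \<in> F then 1 else (0::nat)) = 1"
    using deg_formula[OF tf O w] d unfolding tt_def by simp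
  then show ?thesis by (cases "tt F w"; cases "{w, bwd w} \<in> F") simp_all
qed

lemma both:
  assumes tf: "two_factor N F" and O: "Os F = {}" and w: "w \<in> V" and d: "{w, diam w} \<notin> F"
  shows "{w, bwd w} \<in> F \<and> tt F w"
proof -
  have "(if tt F w then 1 else 0) + (if {w, bwd w} \<in> F then 1 else (0::nat)) = 2"
    using deg_formula[OF tf O w] d unfolding tt_def by simp
  then show ?thesis by (cases "tt F w"; cases "{w, bwd w} \<in> F") simp_all
qed

lemma par_tight:
  assumes tf: "two_factor N F" and O: "Os F = {}" and i: "i \<in> V" "i \<le> m"
    and e: "{i, i+m} \<in> F" and tight: "card (CR F {i, i+m}) = N - 3"
  shows "tt F i \<longleftrightarrow> tt F (i + m)"
proof -
  have j: "i + m \<in> V" using i N_m by auto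
  have ij: "i < i + m" using m3 by simp
  have di: "diam i = i + m" using diam_alt[OF i(1)] i by simp
  have dj: "diam (i+m) = i" using diam_diam[OF i(1)] di by simp
  have ei: "{i, diam i} \<in> F" using e di by simp
  have ej: "{i+m, diam (i+m)} \<in> F" using e dj by (simp add: insert_commute)
  note P = pos[OF i]
  note T = tight_Dl[OF tf e ij i(1) j refl tight]
  have ne: "fwd i \<noteq> i + m" "bwd i \<noteq> i + m" "fwd (i+m) \<noteq> i" "bwd (i+m) \<noteq> i"
    using three_distinct[OF i(1)] three_distinct[OF j] di dj by metis+
  show ?thesis
  proof
    assume ti: "tt F i"
    show "tt F (i+m)"
    proof (rule ccontr)
      assume "\<not> tt F (i+m)"
      then have "{i+m, bwd (i+m)} \<in> F" using excl[OF tf O j ej] by simp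
      then show False using T[of "fwd i" "bwd (i+m)"] ti P ne unfolding tt_def by blast
    qed
  next
    assume tj: "tt F (i+m)"
    show "tt F i"
    proof (rule ccontr)
      assume "\<not> tt F i"
      then have "{i, bwd i} \<in> F" using excl[OF tf O i(1) ei] by simp
      then show False using T[of "bwd i" "fwd (i+m)"] tj P ne unfolding tt_def by blast
    qed
  qed
qed

lemma opt_str:
  assumes tf: "two_factor N F" and big: "N * (N - 4) + m - 1 \<le> 2 * crossings F"
  shows "\<exists>u\<in>{1..m}. Str u F"
proof -
  have fin: "finite F" using tf_finite[OF tf] .
  have O: "Os F = {}" and D1: "card (Ds F) \<ge> m - 1" using tight_opt(1)[OF tf big] by auto
  have "card (Ds F) \<noteq> m" using not_Dm[OF tf O] by blast
  then have D: "card (Ds F) = m - 1" using D1 Ds_le[OF fin] by simp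
  have tight: "\<forall>e\<in>F. card (CR F e) = bnd e" using tight_opt(2)[OF tf big D] .
  let ?M = "Min ` Ds F"
  have Msub: "?M \<subseteq> {1..m}" by (meson Ds_mem subsetI)
  have cM: "card ?M = m - 1" using Ds_image[OF fin] D by simp
  have "card ({1..m} - ?M) = 1" using card_Diff_subset[OF _ Msub] cM m3
    by (simp add: finite_subset[OF Msub])
  then obtain u where u: "{1..m} - ?M = {u}" by (rule card_1_singletonE)
  have "u \<in> {1..m}" using u by blast
  then have uV: "u \<in> V" "u \<le> m" "1 \<le> u" using N_m by auto
  have du: "diam u = u + m" using diam_alt[OF uV(1)] uV by simp
  have s1: "\<forall>w\<in>V. {w, diam w} \<in> F \<longleftrightarrow> (w \<noteq> u \<and> w \<noteq> diam u)"
  proof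
    fix w assume w: "w \<in> V"
    show "{w, diam w} \<in> F \<longleftrightarrow> (w \<noteq> u \<and> w \<noteq> diam u)"
    proof (cases "w \<le> m")
      case True
      then have "w \<in> {1..m}" using w by simp
      then have 1: "w \<in> ?M \<longleftrightarrow> w \<noteq> u" using u by blast
      have 2: "{w, diam w} \<in> F \<longleftrightarrow> w \<in> ?M" using diam_in_F[OF w] True by simp
      have 3: "w \<noteq> diam u" using du True uV by simp
      show ?thesis using 1 2 3 by blast
    next
      case False
      then have "w - m \<in> {1..m}" using w N_m by auto
      then have 1: "w - m \<in> ?M \<longleftrightarrow> w - m \<noteq> u" using u by blast
      have 2: "{w, diam w} \<in> F \<longleftrightarrow> w - m \<in> ?M" using diam_in_F[OF w] False by simp
      have 3: "w \<noteq> u" "w - m \<noteq> u \<longleftrightarrow> w \<noteq> diam u" using du False uV by auto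
      show ?thesis using 1 2 3 by blast
    qed
  qed
  have duV: "diam u \<in> V" using sh_in .
  have nu: "{u, diam u} \<notin> F" using s1 uV by auto
  have ndu: "{diam u, diam (diam u)} \<notin> F" using s1 duV by auto
  have str: "Str u F"
    unfolding Str_def
  proof (intro conjI)
    show "u \<in> V" "two_factor N F" "Os F = {}" using uV tf O by auto
    show "\<forall>w\<in>V. {w, diam w} \<in> F \<longleftrightarrow> (w \<noteq> u \<and> w \<noteq> diam u)" using s1 .
    show "\<forall>w\<in>V. w \<noteq> u \<and> w \<noteq> diam u \<longrightarrow> ({w, bwd w} \<in> F \<longleftrightarrow> \<not> tt F w)"
      using s1 excl[OF tf O] by blast
    show "tt F u" "{u, bwd u} \<in> F" using both[OF tf O uV(1) nu] by auto
    show "tt F (diam u)" "{diam u, bwd (diam u)} \<in> F" using both[OF tf O duV ndu] by auto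
    show "\<forall>w\<in>V. w \<noteq> u \<and> w \<noteq> diam u \<longrightarrow> (tt F w \<longleftrightarrow> tt F (diam w))"
    proof (intro ballI impI)
      fix w assume w: "w \<in> V" and wu: "w \<noteq> u \<and> w \<noteq> diam u"
      have ew: "{w, diam w} \<in> F" using s1 w wu by blast
      show "tt F w \<longleftrightarrow> tt F (diam w)"
      proof (cases "w \<le> m")
        case True
        have dw: "diam w = w + m" using diam_alt[OF w] True by simp
        have "card (CR F {w, w+m}) = N - 3"
          using tight ew dw Dl_diam[OF w] unfolding bnd_def by auto
        then show ?thesis using par_tight[OF tf O w True] ew dw by simp
      next
        case False
        define i where "i = w - m"
        have iV: "i \<in> V" "i \<le> m" using False w N_m unfolding i_def by auto
        have dw: "diam w = i" using diam_alt[OF w] False unfolding i_def by simp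
        have wi: "w = i + m" using False unfolding i_def by simp
        have e: "{i, i+m} \<in> F" using ew dw wi by (simp add: insert_commute)
        have "card (CR F {i, i+m}) = N - 3"
          using tight e Dl_diam[OF w] dw wi unfolding bnd_def by (auto simp: insert_commute)
        then show ?thesis using par_tight[OF tf O iV e] dw wi by simp
      qed
    qed
  qed
  then show ?thesis using uV by auto
qed

end

context nn begin

lemma sh_surj: "u \<in> V \<Longrightarrow> w \<in> V \<Longrightarrow> \<exists>r<N. sh r u = w"
proof -
  assume u: "u \<in> V" and w: "w \<in> V"
  define r where "r = (w + N - u) mod N"
  have "r < N" using N6 unfolding r_def by simp
  have "(u - 1 + r) mod N = (u - 1 + (w + N - u)) mod N" unfolding r_def by (simp add: mod_add_right_eq)
  also have "u - 1 + (w + N - u) = (w - 1) + 1 * N" using u w by simp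
  also have "((w - 1) + 1 * N) mod N = w - 1"
  proof -
    have "w - 1 < N" using w by auto
    then show ?thesis by (simp only: mod_mult_self1) simp
  qed
  finally have "sh r u = w" unfolding shift_idx_def using w by simp
  then show ?thesis using \<open>r < N\<close> by blast
qed

lemma sh_0': "u \<in> V \<Longrightarrow> r < N \<Longrightarrow> sh r u = u \<longleftrightarrow> r = 0"
  using sh_inj[of u r 0] sh_0 N6 by auto

lemma sh_m': "u \<in> V \<Longrightarrow> r < N \<Longrightarrow> sh r u = diam u \<longleftrightarrow> r = m"
  using sh_inj[of u r m] m_lt by auto

lemma sh_modN: "sh (r + N) u = sh r u"
  using sh_mod[of "r + N" u] sh_mod[of r u] by simp

lemma str_alt:
  assumes S: "Str u F" and w: "w \<in> V" and wu: "w \<noteq> u" "w \<noteq> diam u" and fu: "fwd w \<noteq> u" "fwd w \<noteq> diam u"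
  shows "tt F (diam (fwd w)) \<longleftrightarrow> \<not> tt F w"
proof -
  have fV: "fwd w \<in> V" using sh_in .
  have s2: "{fwd w, bwd (fwd w)} \<in> F \<longleftrightarrow> \<not> tt F (fwd w)" using S fV fu unfolding Str_def by blast
  have s4: "tt F (fwd w) \<longleftrightarrow> tt F (diam (fwd w))" using S fV fu unfolding Str_def by blast
  have "{fwd w, bwd (fwd w)} = {w, fwd w}" using bwd_fwd[OF w] by auto
  then have "tt F (fwd w) \<longleftrightarrow> \<not> tt F w" using s2 unfolding tt_def by auto
  then show ?thesis using s4 by simp
qed

lemma str_step:
  assumes S: "Str u F" and r: "r + 1 < N" "r + 1 \<noteq> m" "(r + m) mod N \<noteq> 0" "(r + m) mod N \<noteq> m"
  shows "tt F (sh r u) \<longleftrightarrow> \<not> tt F (sh (r+1) u)"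
proof -
  have u: "u \<in> V" using S unfolding Str_def by simp
  let ?w = "sh (r+1) u"
  have w: "?w \<in> V" using sh_in .
  have wu: "?w \<noteq> u" "?w \<noteq> diam u" using sh_0'[OF u r(1)] sh_m'[OF u r(1)] r by auto
  have fw: "fwd ?w = sh ((r + m) mod N) u" using sh_sh[of "m-1" "r+1" u] m3 sh_mod by (simp add: ac_simps)
  have fu: "fwd ?w \<noteq> u" "fwd ?w \<noteq> diam u" unfolding fw using sh_0'[OF u] sh_m'[OF u] r N6 by auto
  have mm: "m + m = N" using N_m by simp
  have "diam (fwd ?w) = sh (r + (m + m)) u" using sh_sh[of m "m-1" ?w] sh_sh[of "m + (m - 1)" "r+1" u] m3
    by (simp add: algebra_simps)
  then have "diam (fwd ?w) = sh (r + N) u" using mm by simp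
  then have "diam (fwd ?w) = sh r u" using sh_modN by simp
  then show ?thesis using str_alt[OF S w wu fu] by simp
qed

definition QQ :: "nat \<Rightarrow> bool" where
  "QQ r \<longleftrightarrow> r = 0 \<or> r = m \<or> (r < m \<and> odd r) \<or> (m < r \<and> even r)"

lemma claimA:
  assumes S: "Str u F"
  shows "1 \<le> r \<Longrightarrow> r \<le> m - 1 \<Longrightarrow> tt F (sh r u) \<longleftrightarrow> odd r"
proof (induction r)
  case 0 then show ?case by simp
next
  case (Suc r)
  have u: "u \<in> V" using S unfolding Str_def by simp
  show ?case
  proof (cases "r = 0")
    case True
    have "sh 1 u = bwd (diam u)"
    proof -
      have mm: "m + m = N" using N_m by simp
      have "bwd (diam u) = sh (1 + (m + m)) u" using sh_sh[of "m+1" m u] by (simp add: algebra_simps)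
      then have "bwd (diam u) = sh (1 + N) u" using mm by simp
      then show ?thesis using sh_modN[of 1 u] by simp
    qed
    moreover have "fwd (bwd (diam u)) = diam u" using fwd_bwd sh_in by blast
    moreover have "{diam u, bwd (diam u)} \<in> F" using S unfolding Str_def by blast
    ultimately show ?thesis using True unfolding tt_def by (simp add: insert_commute)
  next
    case False
    then have IH: "tt F (sh r u) \<longleftrightarrow> odd r" using Suc by simp
    have "r + m < N" using Suc N_m by simp
    then have "(r + m) mod N = r + m" by simp
    then have "tt F (sh r u) \<longleftrightarrow> \<not> tt F (sh (r+1) u)"
      using str_step[OF S] Suc False N_m m3 by simp
    then show ?thesis using IH by simp
  qed
qed

lemma claimB:
  assumes S: "Str u F"
  shows "r \<le> m - 2 \<Longrightarrow> tt F (sh (m + 1 + r) u) \<longleftrightarrow> even (m + 1 + r)"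
proof (induction r)
  case 0
  have "tt F (bwd u)"
  proof -
    have "fwd (bwd u) = u" using fwd_bwd S unfolding Str_def by blast
    moreover have "{u, bwd u} \<in> F" using S unfolding Str_def by blast
    ultimately show ?thesis unfolding tt_def by (simp add: insert_commute)
  qed
  moreover have "even (m + 1)" using m_odd by simp
  ultimately show ?case by simp
next
  case (Suc r)
  then have IH: "tt F (sh (m + 1 + r) u) \<longleftrightarrow> even (m + 1 + r)" by simp
  have a: "m + 1 + r + m = (r + 1) + N" using N_m by simp
  have "(m + 1 + r + m) mod N = r + 1"
  proof -
    have "r + 1 < N" using Suc N_m by simp
    have "(m + 1 + r + m) = (r + 1) + 1 * N" using a by simp
    then show ?thesis using \<open>r + 1 < N\<close> by (simp only: mod_mult_self1) simp
  qed
  then have "tt F (sh (m + 1 + r) u) \<longleftrightarrow> \<not> tt F (sh (m + 1 + r + 1) u)"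
    using str_step[OF S, of "m + 1 + r"] Suc N_m m3 by simp
  then show ?case using IH by auto
qed

lemma str_QQ:
  assumes S: "Str u F" and r: "r < N"
  shows "tt F (sh r u) \<longleftrightarrow> QQ r"
proof -
  have u: "u \<in> V" using S unfolding Str_def by simp
  consider "r = 0" | "r = m" | "1 \<le> r \<and> r \<le> m - 1" | "m + 1 \<le> r" using m3 by linarith
  then show ?thesis
  proof cases
    case 1 then show ?thesis using S sh_0[OF u] unfolding Str_def QQ_def by simp
  next
    case 2 then show ?thesis using S unfolding Str_def QQ_def by simp
  next
    case 3 then show ?thesis using claimA[OF S] unfolding QQ_def by auto
  next
    case 4
    define k where "k = r - (m + 1)"
    have r': "r = m + 1 + k" "k \<le> m - 2" using 4 r N_m unfolding k_def by auto
    show ?thesis using claimB[OF S r'(2)] r' unfolding QQ_def by auto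
  qed
qed

definition Fam :: "nat \<Rightarrow> nat set set" where
  "Fam u = {{sh r u, diam (sh r u)} | r. r < N \<and> r \<noteq> 0 \<and> r \<noteq> m} \<union> {{sh r u, fwd (sh r u)} | r. r < N \<and> QQ r}"

lemma str_Fam:
  assumes S: "Str u F"
  shows "F = Fam u"
proof -
  have u: "u \<in> V" and tf: "two_factor N F" and O: "Os F = {}"
    and s1: "\<forall>w\<in>V. {w, diam w} \<in> F \<longleftrightarrow> (w \<noteq> u \<and> w \<noteq> diam u)"
    using S unfolding Str_def by auto
  have tQ: "QQ r" if "r < N" "tt F (sh r u)" for r using str_QQ[OF S] that by blast
  show ?thesis
  proof
    show "Fam u \<subseteq> F"
    proof
      fix f assume "f \<in> Fam u"
      then consider r where "f = {sh r u, diam (sh r u)}" "r < N" "r \<noteq> 0" "r \<noteq> m"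
        | r where "f = {sh r u, fwd (sh r u)}" "r < N" "QQ r" unfolding Fam_def by blast
      then show "f \<in> F"
      proof cases
        case 1
        then show ?thesis using s1 sh_in sh_0'[OF u] sh_m'[OF u] by blast
      next
        case 2
        then show ?thesis using str_QQ[OF S] unfolding tt_def by blast
      qed
    qed
  next
    show "F \<subseteq> Fam u"
    proof
      fix f assume f: "f \<in> F"
      then have DL: "Dl f \<or> Ll f" using O unfolding Os_def by auto
      obtain a b where ab: "f = {a,b}" "a \<in> V" "b \<in> V" "a < b" using tf_edges[OF tf f] by blast
      obtain r where r: "r < N" "sh r u = a" using sh_surj[OF u ab(2)] by blast
      from DL show "f \<in> Fam u"
      proof
        assume "Dl f"
        then have fd: "f = {a, diam a}" using Dl_at ab by blast
        then have "a \<noteq> u" "a \<noteq> diam u" using s1 f ab by auto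
        then have "r \<noteq> 0" "r \<noteq> m" using r sh_0'[OF u] sh_m'[OF u] by auto
        then show ?thesis unfolding Fam_def using fd r by blast
      next
        assume "Ll f"
        then have "f = {a, fwd a} \<or> f = {a, bwd a}" using Ll_at ab by blast
        then show ?thesis
        proof
          assume fa: "f = {a, fwd a}"
          then have "QQ r" using tQ r f unfolding tt_def by blast
          then show ?thesis unfolding Fam_def using fa r by blast
        next
          assume fa: "f = {a, bwd a}"
          obtain r' where r': "r' < N" "sh r' u = bwd a" using sh_surj[OF u sh_in] by blast
          have "f = {bwd a, fwd (bwd a)}" using fa fwd_bwd[OF ab(2)] by auto
          then have "QQ r'" using tQ r' f unfolding tt_def by auto
          moreover have "f = {sh r' u, fwd (sh r' u)}" using \<open>f = {bwd a, fwd (bwd a)}\<close> r'(2) by simp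
          ultimately show ?thesis unfolding Fam_def using r'(1) by blast
        qed
      qed
    qed
  qed
qed

end

context nn begin

lemma noDL:
  assumes "a + m - 1 \<noteq> b" "b + m - 1 \<noteq> a" "a + m \<noteq> b" "b + m \<noteq> a" "a + m + 1 \<noteq> b" "b + m + 1 \<noteq> a"
  shows "\<not> Dl {a,b} \<and> \<not> Ll {a,b}"
  using assms unfolding Dl_def Ll_def by (auto simp: doubleton_eq_iff)

lemma edge_at_cases:
  assumes O: "Os F = {}" and f: "f \<in> F" and v: "v \<in> f" "v \<in> V"
  shows "f = {v, diam v} \<or> f = {v, fwd v} \<or> f = {v, bwd v}"
proof -
  have "Dl f \<or> Ll f" using O f unfolding Os_def by auto
  then show ?thesis using Dl_at[OF v(1)] Ll_at[OF v(1)] by blast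
qed

lemma one_lemma:
  assumes tf: "two_factor N F" and O: "Os F = {}" and ij: "i < j" "i \<in> V" "j \<in> V"
    and S: "S = In i j \<or> S = Out i j"
    and len: "\<And>x y. x \<in> S \<Longrightarrow> y \<in> S \<Longrightarrow> x \<noteq> y \<Longrightarrow> \<not> Dl {x,y} \<and> \<not> Ll {x,y}"
    and endp: "\<And>f. f \<in> F \<Longrightarrow> f \<noteq> g \<Longrightarrow> i \<in> f \<or> j \<in> f \<Longrightarrow> f \<inter> S = {}"
    and f: "f \<in> F - CR F {i,j}" "f \<noteq> g"
  shows "f \<inter> S = {}"
proof (rule ccontr)
  assume "f \<inter> S \<noteq> {}"
  then obtain x where x: "x \<in> f" "x \<in> S" by blast
  have fF: "f \<in> F" using f by simp
  obtain y where y: "f = {x, y}" "y \<in> V" "y \<noteq> x" using other_end[OF tf fF x(1)] by blast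
  have DL: "Dl f \<or> Ll f" using O fF unfolding Os_def by auto
  have xV: "x \<in> V" using x(2) S unfolding In_def Out_def using ij by auto
  consider "y \<in> S" | "y = i \<or> y = j" | "y \<notin> S" "y \<noteq> i" "y \<noteq> j" by blast
  then show False
  proof cases
    case 1 then show ?thesis using len[OF x(2) 1] y DL by auto
  next
    case 2 then have "i \<in> f \<or> j \<in> f" using y by auto
    then show ?thesis using endp[OF fF f(2)] x by blast
  next
    case 3
    have xij: "x \<noteq> i" "x \<noteq> j" using x(2) S ij unfolding In_def Out_def by auto
    have ci: "crosses {i,j} {x,y} \<longleftrightarrow> (x \<in> In i j \<and> y \<in> Out i j) \<or> (y \<in> In i j \<and> x \<in> Out i j)"
      using cross_io[OF ij(1) xV y(2) y(3)[symmetric]] .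
    have "crosses {i,j} {x,y}"
      using S
    proof
      assume SI: "S = In i j"
      have "y \<in> Out i j" using 3 y(2) unfolding SI In_def Out_def by auto
      then show ?thesis using ci x(2) SI by blast
    next
      assume SO: "S = Out i j"
      have "y \<in> In i j" using 3 y(2) unfolding SO In_def Out_def by auto
      then show ?thesis using ci x(2) SO by blast
    qed
    then have "f \<in> CR F {i,j}" using fF y unfolding CR_def by simp
    then show False using f by simp
  qed
qed

lemma sum_zero_side:
  assumes "\<forall>f\<in>A. f \<inter> S = {}"
  shows "(\<Sum>f\<in>A. card (f \<inter> S)) = 0"
  using assms by simp

lemma sum_one_side:
  assumes fin: "finite A" and g: "g \<in> A" "card (g \<inter> S) = 1" and o: "\<forall>f\<in>A. f \<noteq> g \<longrightarrow> f \<inter> S = {}"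
  shows "(\<Sum>f\<in>A. card (f \<inter> S)) = 1"
proof -
  have "(\<Sum>f\<in>A. card (f \<inter> S)) = card (g \<inter> S) + (\<Sum>f\<in>A - {g}. card (f \<inter> S))"
    using fin g(1) by (rule sum.remove)
  moreover have "(\<Sum>f\<in>A - {g}. card (f \<inter> S)) = 0" using o by simp
  ultimately show ?thesis using g by simp
qed

lemma str_tight:
  assumes S: "Str u F" and e: "e \<in> F"
  shows "card (CR F e) = bnd e"
proof -
  have u: "u \<in> V" and tf: "two_factor N F" and O: "Os F = {}"
    and s1: "\<forall>w\<in>V. {w, diam w} \<in> F \<longleftrightarrow> (w \<noteq> u \<and> w \<noteq> diam u)"
    and s2: "\<forall>w\<in>V. w \<noteq> u \<and> w \<noteq> diam u \<longrightarrow> ({w, bwd w} \<in> F \<longleftrightarrow> \<not> tt F w)"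
    and s4: "\<forall>w\<in>V. w \<noteq> u \<and> w \<noteq> diam u \<longrightarrow> (tt F w \<longleftrightarrow> tt F (diam w))"
    using S unfolding Str_def by auto
  have fin: "finite (F - CR F e)" using tf_finite[OF tf] by simp
  obtain i j where ij: "e = {i,j}" "i \<in> V" "j \<in> V" "i < j" using tf_edges[OF tf e] by blast
  have DL: "Dl e \<or> Ll e" using O e unfolding Os_def by auto
  then show ?thesis
  proof
    assume Le: "Ll e"
    then have nD: "\<not> Dl e" using not_DL by blast
    have jj: "j = i + m - 1 \<or> j = i + m + 1" using Le Ll_ij[OF ij(4)] ij(1) by simp
    define Sd where "Sd = (if j = i + m - 1 then In i j else Out i j)"
    have Sd: "Sd = In i j \<or> Sd = Out i j" unfolding Sd_def by simp
    have len: "\<not> Dl {x,y} \<and> \<not> Ll {x,y}" if x: "x \<in> Sd" and y: "y \<in> Sd \<or> y = i \<or> y = j" and xy: "x \<noteq> y" for x y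
    proof (rule noDL)
      have "(i < x \<and> x < j \<and> (i < y \<and> y < j \<or> y = i \<or> y = j) \<and> j = i + m - 1) \<or>
            (x \<in> V \<and> (x < i \<or> j < x) \<and> (y \<in> V \<and> (y < i \<or> j < y) \<or> y = i \<or> y = j) \<and> j = i + m + 1)"
        using x y jj m3 unfolding Sd_def In_def Out_def by (auto split: if_splits)
      then show "x + m - 1 \<noteq> y" "y + m - 1 \<noteq> x" "x + m \<noteq> y" "y + m \<noteq> x" "x + m + 1 \<noteq> y" "y + m + 1 \<noteq> x"
        using N_m m3 ij by auto
    qed
    have endp: "f \<inter> Sd = {}" if f: "f \<in> F" "f \<noteq> e" "i \<in> f \<or> j \<in> f" for f
    proof (rule ccontr)
      assume "f \<inter> Sd \<noteq> {}"
      then obtain z where z: "z \<in> f" "z \<in> Sd" by blast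
      have fDL: "Dl f \<or> Ll f" using O f unfolding Os_def by auto
      from f(3) show False
      proof
        assume "i \<in> f"
        then obtain w where w: "f = {i,w}" "w \<in> V" "w \<noteq> i" using other_end[OF tf f(1)] by blast
        have "z \<noteq> i" using z Sd ij unfolding In_def Out_def by auto
        then have "z = w" using z w by auto
        then show False using len[OF z(2), of i] w fDL \<open>z \<noteq> i\<close> by (auto simp: insert_commute)
      next
        assume "j \<in> f"
        then obtain w where w: "f = {j,w}" "w \<in> V" "w \<noteq> j" using other_end[OF tf f(1)] by blast
        have "z \<noteq> j" using z Sd ij unfolding In_def Out_def by auto
        then have "z = w" using z w by auto
        then show False using len[OF z(2), of j] w fDL \<open>z \<noteq> j\<close> by (auto simp: insert_commute)
      qed
    qed
    have zero: "\<forall>f\<in>F - CR F {i,j}. f \<inter> Sd = {}"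
    proof
      fix f assume f: "f \<in> F - CR F {i,j}"
      show "f \<inter> Sd = {}"
      proof (cases "f = e")
        case True then show ?thesis using Sd ij unfolding In_def Out_def by auto
      next
        case False
        show ?thesis
          by (rule one_lemma[OF tf O ij(4,2,3) Sd _ _ f False])
             (use len endp in \<open>auto simp: ij(1)\<close>)
      qed
    qed
    have "card (CR F e) = N - 4"
    proof (cases "j = i + m - 1")
      case True
      then have "Sd = In i j" unfolding Sd_def by simp
      then show ?thesis using side_In[OF tf ij(4,2,3)] zero True ij(1) N_m m3 by simp
    next
      case False
      then have "Sd = Out i j" "j = i + m + 1" using jj unfolding Sd_def by auto
      then show ?thesis using side_Out[OF tf ij(4,2,3)] zero ij(1) N_m m3 by simp
    qed
    then show ?thesis using Le nD unfolding bnd_def by simp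
  next
    assume De: "Dl e"
    have jm: "j = i + m" "i \<le> m" using De Dl_ij[OF ij(4)] ij N_m by auto
    have di: "diam i = j" using diam_alt[OF ij(2)] jm by simp
    have dj: "diam j = i" using diam_diam[OF ij(2)] di by simp
    have eF: "{i, diam i} \<in> F" "{j, diam j} \<in> F" using e ij(1) di dj by (auto simp: insert_commute)
    have iu: "i \<noteq> u \<and> i \<noteq> diam u" "j \<noteq> u \<and> j \<noteq> diam u" using s1 eF ij by auto
    have par: "tt F i \<longleftrightarrow> tt F j" using s4 iu ij di by auto
    have exi: "{i, bwd i} \<in> F \<longleftrightarrow> \<not> tt F i" "{j, bwd j} \<in> F \<longleftrightarrow> \<not> tt F j" using s2 iu ij by auto
    note P = pos[OF ij(2) jm(2)]
    have P': "fwd i \<in> In i j" "bwd i \<in> Out i j" "fwd j \<in> Out i j" "bwd j \<in> In i j" using P jm by auto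
    have disj: "In i j \<inter> Out i j = {}" "i \<notin> In i j" "j \<notin> In i j" unfolding In_def Out_def by auto
    have len: "\<not> Dl {x,y} \<and> \<not> Ll {x,y}" if x: "x \<in> In i j" and y: "y \<in> In i j" and xy: "x \<noteq> y" for x y
    proof (rule noDL)
      show "x + m - 1 \<noteq> y" "y + m - 1 \<noteq> x" "x + m \<noteq> y" "y + m \<noteq> x" "x + m + 1 \<noteq> y" "y + m + 1 \<noteq> x"
        using x y jm m3 unfolding In_def by auto
    qed
    have ee: "e \<inter> In i j = {}" using ij(1) disj by auto
    have main: "\<exists>g\<in>F - CR F {i,j}. card (g \<inter> In i j) = 1 \<and> (\<forall>f\<in>F. f \<noteq> g \<longrightarrow> i \<in> f \<or> j \<in> f \<longrightarrow> f \<inter> In i j = {})"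
    proof (cases "tt F i")
      case True
      then have tj: "tt F j" using par by simp
      let ?g = "{i, fwd i}"
      have gF: "?g \<in> F" using True unfolding tt_def by simp
      have gC: "?g \<notin> CR F {i,j}" using CR_card1(3)[OF tf ij(4)] by blast
      have gI: "?g \<inter> In i j = {fwd i}" using P'(1) disj by auto
      have ends: "\<forall>f\<in>F. f \<noteq> ?g \<longrightarrow> i \<in> f \<or> j \<in> f \<longrightarrow> f \<inter> In i j = {}"
      proof (intro ballI impI)
        fix f assume f: "f \<in> F" "f \<noteq> ?g" "i \<in> f \<or> j \<in> f"
        from f(3) show "f \<inter> In i j = {}"
        proof
          assume "i \<in> f"
          then have "f = {i, diam i} \<or> f = {i, fwd i} \<or> f = {i, bwd i}" using edge_at_cases[OF O f(1)] ij by blast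
          then show ?thesis using f exi True di ee ij(1) by auto
        next
          assume "j \<in> f"
          then have "f = {j, diam j} \<or> f = {j, fwd j} \<or> f = {j, bwd j}" using edge_at_cases[OF O f(1)] ij by blast
          then show ?thesis using f exi tj dj ee ij(1) P'(3) disj by (auto simp: insert_commute)
        qed
      qed
      show ?thesis using gF gC gI ends by (intro bexI[of _ ?g]) auto
    next
      case False
      then have tj: "\<not> tt F j" using par by simp
      let ?g = "{j, bwd j}"
      have gF: "?g \<in> F" using tj exi by simp
      have gC: "?g \<notin> CR F {i,j}" using CR_card1(4)[OF tf ij(4)] by blast
      have gI: "?g \<inter> In i j = {bwd j}" using P'(4) disj by auto
      have ends: "\<forall>f\<in>F. f \<noteq> ?g \<longrightarrow> i \<in> f \<or> j \<in> f \<longrightarrow> f \<inter> In i j = {}"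
      proof (intro ballI impI)
        fix f assume f: "f \<in> F" "f \<noteq> ?g" "i \<in> f \<or> j \<in> f"
        from f(3) show "f \<inter> In i j = {}"
        proof
          assume "i \<in> f"
          then have "f = {i, diam i} \<or> f = {i, fwd i} \<or> f = {i, bwd i}" using edge_at_cases[OF O f(1)] ij by blast
          then show ?thesis using f False di ee ij(1) P'(2) disj unfolding tt_def by auto
        next
          assume "j \<in> f"
          then have "f = {j, diam j} \<or> f = {j, fwd j} \<or> f = {j, bwd j}" using edge_at_cases[OF O f(1)] ij by blast
          then show ?thesis using f tj dj ee ij(1) unfolding tt_def by (auto simp: insert_commute)
        qed
      qed
      show ?thesis using gF gC gI ends by (intro bexI[of _ ?g]) auto
    qed
    then obtain g where g: "g \<in> F - CR F {i,j}" "card (g \<inter> In i j) = 1"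
      and ends: "\<forall>f\<in>F. f \<noteq> g \<longrightarrow> i \<in> f \<or> j \<in> f \<longrightarrow> f \<inter> In i j = {}" by blast
    have oth: "\<forall>f\<in>F - CR F {i,j}. f \<noteq> g \<longrightarrow> f \<inter> In i j = {}"
    proof (intro ballI impI)
      fix f assume f: "f \<in> F - CR F {i,j}" "f \<noteq> g"
      show "f \<inter> In i j = {}"
        by (rule one_lemma[OF tf O ij(4,2,3) _ _ _ f]) (use len ends in auto)
    qed
    have "(\<Sum>f\<in>F - CR F {i,j}. card (f \<inter> In i j)) = 1"
      using sum_one_side[OF _ g oth] fin ij(1) by simp
    then have "card (CR F e) = N - 3" using side_In[OF tf ij(4,2,3)] ij(1) jm N_m m3 by simp
    then show ?thesis using De unfolding bnd_def by simp
  qed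
qed

end

context nn begin

lemma str_Ds:
  assumes S: "Str u F"
  shows "card (Ds F) = m - 1"
proof -
  have u: "u \<in> V" and tf: "two_factor N F"
    and s1: "\<forall>w\<in>V. {w, diam w} \<in> F \<longleftrightarrow> (w \<noteq> u \<and> w \<noteq> diam u)"
    using S unfolding Str_def by auto
  define u0 where "u0 = (if u \<le> m then u else u - m)"
  have u0: "u0 \<in> {1..m}" using u N_m unfolding u0_def by auto
  have "Min ` Ds F = {1..m} - {u0}"
  proof (rule set_eqI)
    fix a
    show "a \<in> Min ` Ds F \<longleftrightarrow> a \<in> {1..m} - {u0}"
    proof (cases "a \<in> {1..m}")
      case True
      then have aV: "a \<in> V" using N_m by auto
      have da: "diam a = a + m" using diam_alt[OF aV] True by simp
      have "{a, diam a} \<in> F \<longleftrightarrow> a \<noteq> u \<and> a \<noteq> diam u" using s1 aV by blast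
      then have "{a, a+m} \<in> F \<longleftrightarrow> a \<noteq> u \<and> a \<noteq> diam u" using da by simp
      moreover have "a \<noteq> u \<and> a \<noteq> diam u \<longleftrightarrow> a \<noteq> u0"
        using diam_alt[OF u] True u unfolding u0_def by auto
      ultimately show ?thesis using Ds_mem True by auto
    next
      case False then show ?thesis using Ds_mem by auto
    qed
  qed
  moreover have "card ({1..m} - {u0}) = m - 1" using u0 by simp
  ultimately show ?thesis using Ds_image[OF tf_finite[OF tf]] by simp
qed

lemma str_cross:
  assumes S: "Str u F"
  shows "2 * crossings F = N * (N - 4) + m - 1"
proof -
  have tf: "two_factor N F" and O: "Os F = {}" using S unfolding Str_def by auto
  have fin: "finite F" using tf_finite[OF tf] .
  have "2 * crossings F = (\<Sum>e\<in>F. card (CR F e))" using crossings_sum[OF fin] unfolding CR_def by simp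
  also have "\<dots> = (\<Sum>e\<in>F. bnd e)" using str_tight[OF S] by simp
  also have "\<dots> = (\<Sum>e\<in>F. (N - 4) + (if Dl e then 1 else 0))"
    using N6 O unfolding Os_def by (intro sum.cong) (auto simp: bnd_def)
  also have "\<dots> = N * (N - 4) + card (Ds F)"
    using fin tf_card[OF tf] by (simp add: sum.distrib sum.If_cases Ds_def Int_def)
  finally show ?thesis using str_Ds[OF S] m3 by simp
qed

lemma QA:
  assumes r: "r < N" "r \<noteq> 0" "r \<noteq> m"
  shows "QQ ((r + m + 1) mod N) \<longleftrightarrow> \<not> QQ r"
proof -
  obtain q where q: "m = 2*q + 1" using m_odd oddE by blast
  consider "r < m - 1" | "r = m - 1" | "m < r" "r < N - 1" | "r = N - 1" using r m3 N_m by linarith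
  then show ?thesis
  proof cases
    case 1
    then have "(r + m + 1) mod N = r + m + 1" using N_m by simp
    then show ?thesis using 1 r q unfolding QQ_def by (auto; presburger)
  next
    case 2
    then have "r + m + 1 = N" using N_m m3 by simp
    then have "(r + m + 1) mod N = 0" by simp
    then show ?thesis using 2 r q unfolding QQ_def by auto
  next
    case 3
    then have "(r + m + 1) = (r + 1 - m) + 1 * N" using N_m by simp
    then have "(r + m + 1) mod N = r + 1 - m" using 3 N_m by (simp only: mod_mult_self1) simp
    then show ?thesis using 3 r q N_m unfolding QQ_def by (auto; presburger)
  next
    case 4
    then have "(r + m + 1) = m + 1 * N" using N_m m3 by simp
    then have "(r + m + 1) mod N = m" using 4 N_m by (simp only: mod_mult_self1) simp
    then show ?thesis using 4 r q N_m unfolding QQ_def by (auto; presburger)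
  qed
qed

lemma QB:
  assumes r: "r < N" "r \<noteq> 0" "r \<noteq> m"
  shows "QQ ((r + m) mod N) \<longleftrightarrow> QQ r"
proof -
  obtain q where q: "m = 2*q + 1" using m_odd oddE by blast
  consider "r < m" | "m < r" using r by linarith
  then show ?thesis
  proof cases
    case 1
    then have "(r + m) mod N = r + m" using N_m by simp
    then show ?thesis using 1 r q unfolding QQ_def by (auto; presburger)
  next
    case 2
    then have "(r + m) = (r - m) + 1 * N" using N_m by simp
    then have "(r + m) mod N = r - m" using 2 r N_m by (simp only: mod_mult_self1) simp
    then show ?thesis using 2 r q N_m unfolding QQ_def by (auto; presburger)
  qed
qed

lemma QQ_special: "QQ 0" "QQ m" "QQ (m+1)" "QQ 1"
  using m_odd m3 unfolding QQ_def by auto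

end

context nn begin

lemma shsh: "sh a (sh b u) = sh ((a + b) mod N) u"
  using sh_sh sh_mod by simp

lemma sh_eq: "u \<in> V \<Longrightarrow> a < N \<Longrightarrow> b < N \<Longrightarrow> sh a u = sh b u \<longleftrightarrow> a = b"
  using sh_inj by blast

lemma mod_m: "s < N \<Longrightarrow> (s + m) mod N = (if s < m then s + m else s - m)"
proof -
  assume s: "s < N"
  show ?thesis
  proof (cases "s < m")
    case True then show ?thesis using N_m by simp
  next
    case False
    then have "s + m = (s - m) + 1 * N" using N_m by simp
    then have "(s + m) mod N = s - m" using s N_m by (simp only: mod_mult_self1) simp
    then show ?thesis using False by simp
  qed
qed

lemma mm1: "(m + m + 1) mod N = 1"
proof -
  have "m + m + 1 = 1 + 1 * N" using N_m by simp
  then show ?thesis using N6 by (simp only: mod_mult_self1) simp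
qed

lemma diam_sh: "diam (sh r u) = sh ((r + m) mod N) u" using shsh by (simp add: add.commute)
lemma fwd_sh: "fwd (sh r u) = sh ((r + (m - 1)) mod N) u" using shsh by (simp add: add.commute)
lemma bwd_sh: "bwd (sh r u) = sh ((r + m + 1) mod N) u" using shsh[of "m+1" r u] by (simp add: ac_simps)

lemma fwd_fwd_ne: "x \<in> V \<Longrightarrow> fwd (fwd x) \<noteq> x"
proof
  assume x: "x \<in> V" and h: "fwd (fwd x) = x"
  have "sh (m - 1 + (m - 1)) x = sh 0 x" using h sh_sh sh_0[OF x] by simp
  moreover have "m - 1 + (m - 1) < N" "0 < N" using N_m m3 by auto
  ultimately have "m - 1 + (m - 1) = 0" using sh_inj[OF x] by blast
  then show False using m3 by simp
qed

lemma mD: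
  assumes u: "u \<in> V" and r: "r < N"
  shows "{sh r u, diam (sh r u)} \<in> Fam u \<longleftrightarrow> r \<noteq> 0 \<and> r \<noteq> m"
proof
  assume "r \<noteq> 0 \<and> r \<noteq> m" then show "{sh r u, diam (sh r u)} \<in> Fam u"
    unfolding Fam_def using r by blast
next
  let ?x = "sh r u"
  assume h: "{?x, diam ?x} \<in> Fam u"
  have xV: "?x \<in> V" using sh_in .
  have dx: "Dl {?x, diam ?x}" using Dl_diam[OF xV] .
  from h consider s where "{?x, diam ?x} = {sh s u, diam (sh s u)}" "s < N" "s \<noteq> 0" "s \<noteq> m"
    | s where "{?x, diam ?x} = {sh s u, fwd (sh s u)}" "s < N" "QQ s" unfolding Fam_def by blast
  then show "r \<noteq> 0 \<and> r \<noteq> m"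
  proof cases
    case 1
    then have "?x = sh s u \<or> ?x = diam (sh s u)" by (auto simp: doubleton_eq_iff)
    then show ?thesis
    proof
      assume "?x = sh s u" then have "r = s" using sh_eq[OF u r 1(2)] by simp
      then show ?thesis using 1 by simp
    next
      assume "?x = diam (sh s u)"
      then have "?x = sh ((s + m) mod N) u" using diam_sh by simp
      then have "r = (s + m) mod N" using sh_eq[OF u r] N6 by simp
      then show ?thesis using mod_m[OF 1(2)] 1 N_m by (auto split: if_splits)
    qed
  next
    case 2
    have "Ll {sh s u, fwd (sh s u)}" using Ll_fwd sh_in by blast
    then show ?thesis using 2 dx not_DL by metis
  qed
qed

lemma mL:
  assumes u: "u \<in> V" and r: "r < N"
  shows "{sh r u, fwd (sh r u)} \<in> Fam u \<longleftrightarrow> QQ r"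
proof
  assume "QQ r" then show "{sh r u, fwd (sh r u)} \<in> Fam u"
    unfolding Fam_def using r by blast
next
  let ?x = "sh r u"
  assume h: "{?x, fwd ?x} \<in> Fam u"
  have xV: "?x \<in> V" using sh_in .
  have lx: "Ll {?x, fwd ?x}" using Ll_fwd[OF xV] .
  from h consider s where "{?x, fwd ?x} = {sh s u, diam (sh s u)}" "s < N" "s \<noteq> 0" "s \<noteq> m"
    | s where "{?x, fwd ?x} = {sh s u, fwd (sh s u)}" "s < N" "QQ s" unfolding Fam_def by blast
  then show "QQ r"
  proof cases
    case 1
    have "Dl {sh s u, diam (sh s u)}" using Dl_diam sh_in by blast
    then show ?thesis using 1 lx not_DL by metis
  next
    case 2
    then have "(?x = sh s u) \<or> (?x = fwd (sh s u) \<and> fwd ?x = sh s u)" by (auto simp: doubleton_eq_iff)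
    then show ?thesis
    proof
      assume "?x = sh s u" then have "r = s" using sh_eq[OF u r 2(2)] by simp
      then show ?thesis using 2 by simp
    next
      assume "?x = fwd (sh s u) \<and> fwd ?x = sh s u"
      then have "fwd (fwd (sh s u)) = sh s u" by metis
      then show ?thesis using fwd_fwd_ne sh_in by blast
    qed
  qed
qed

lemma Fam_edges: "f \<in> Fam u \<Longrightarrow> \<exists>x\<in>V. f = {x, diam x} \<or> f = {x, fwd x}"
  unfolding Fam_def using sh_in by blast

lemma Fam_str:
  assumes u: "u \<in> V"
  shows "Str u (Fam u)"
proof -
  let ?G = "Fam u"
  have O: "Os ?G = {}"
    unfolding Os_def using Fam_edges Dl_diam Ll_fwd by blast
  have rep: "\<exists>r<N. sh r u = w" if "w \<in> V" for w using sh_surj[OF u that] .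
  have bw: "{w, bwd w} \<in> ?G \<longleftrightarrow> QQ ((r + m + 1) mod N)" if r: "r < N" "w = sh r u" for w r
  proof -
    have "{w, bwd w} = {bwd w, fwd (bwd w)}" using fwd_bwd[OF sh_in] r by auto
    moreover have "bwd w = sh ((r + m + 1) mod N) u" using bwd_sh r by simp
    moreover have "(r + m + 1) mod N < N" using N6 by simp
    ultimately show ?thesis using mL[OF u] by simp
  qed
  have dg: "card {f\<in>?G. w \<in> f} = 2" if w: "w \<in> V" for w
  proof -
    obtain r where r: "r < N" "sh r u = w" using rep[OF w] by blast
    have eq: "{f\<in>?G. w \<in> f} = {f\<in>{{w, diam w}, {w, fwd w}, {w, bwd w}}. f \<in> ?G}"
      using edge_at_cases[OF O _ _ w] by auto
    have d: "{w, diam w} \<noteq> {w, fwd w}" "{w, diam w} \<noteq> {w, bwd w}" "{w, fwd w} \<noteq> {w, bwd w}"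
      using three_distinct[OF w] by (auto simp: doubleton_eq_iff)
    have "card {f\<in>{{w, diam w}, {w, fwd w}, {w, bwd w}}. f \<in> ?G} =
      (if {w, diam w} \<in> ?G then 1 else 0) + (if {w, fwd w} \<in> ?G then 1 else 0) + (if {w, bwd w} \<in> ?G then 1 else (0::nat))"
      by (subst card_filter_sum) (use d in simp_all)
    also have "\<dots> = (if r \<noteq> 0 \<and> r \<noteq> m then 1 else 0) + (if QQ r then 1 else 0) + (if QQ ((r + m + 1) mod N) then 1 else (0::nat))"
      using mD[OF u r(1)] mL[OF u r(1)] bw[OF r(1) r(2)[symmetric]] r(2) by simp
    also have "\<dots> = 2"
    proof -
      consider "r = 0" | "r = m" | "r \<noteq> 0" "r \<noteq> m" by blast
      then show ?thesis
      proof cases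
        case 1 then show ?thesis using QQ_special N_m m3 by simp
      next
        case 2
        then show ?thesis using mm1 QQ_special by simp
      next
        case 3 then show ?thesis using QA[OF r(1) 3] by auto
      qed
    qed
    finally show ?thesis using eq by simp
  qed
  have tf: "two_factor N ?G"
    unfolding two_factor_def
  proof (intro conjI ballI)
    show "?G \<subseteq> {{i, j} |i j. i \<in> V \<and> j \<in> V \<and> i \<noteq> j}"
    proof
      fix f assume "f \<in> ?G"
      then obtain x where x: "x \<in> V" "f = {x, diam x} \<or> f = {x, fwd x}" using Fam_edges by blast
      then show "f \<in> {{i, j} |i j. i \<in> V \<and> j \<in> V \<and> i \<noteq> j}"
        using three_distinct[OF x(1)] sh_in by blast
    qed
    fix v assume "v \<in> V" then show "card {e\<in>?G. v \<in> e} = 2" using dg by simp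
  qed
  have s1: "\<forall>w\<in>V. {w, diam w} \<in> ?G \<longleftrightarrow> (w \<noteq> u \<and> w \<noteq> diam u)"
  proof
    fix w assume w: "w \<in> V"
    obtain r where r: "r < N" "sh r u = w" using rep[OF w] by blast
    show "{w, diam w} \<in> ?G \<longleftrightarrow> (w \<noteq> u \<and> w \<noteq> diam u)"
      using mD[OF u r(1)] r sh_0'[OF u r(1)] sh_m'[OF u r(1)] by auto
  qed
  have s2: "\<forall>w\<in>V. w \<noteq> u \<and> w \<noteq> diam u \<longrightarrow> ({w, bwd w} \<in> ?G \<longleftrightarrow> \<not> tt ?G w)"
  proof (intro ballI impI)
    fix w assume w: "w \<in> V" and wu: "w \<noteq> u \<and> w \<noteq> diam u"
    obtain r where r: "r < N" "sh r u = w" using rep[OF w] by blast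
    have r0: "r \<noteq> 0" "r \<noteq> m" using wu r sh_0'[OF u r(1)] sh_m'[OF u r(1)] by auto
    show "{w, bwd w} \<in> ?G \<longleftrightarrow> \<not> tt ?G w"
      using bw[OF r(1) r(2)[symmetric]] QA[OF r(1) r0] mL[OF u r(1)] r(2) unfolding tt_def by simp
  qed
  have s4: "\<forall>w\<in>V. w \<noteq> u \<and> w \<noteq> diam u \<longrightarrow> (tt ?G w \<longleftrightarrow> tt ?G (diam w))"
  proof (intro ballI impI)
    fix w assume w: "w \<in> V" and wu: "w \<noteq> u \<and> w \<noteq> diam u"
    obtain r where r: "r < N" "sh r u = w" using rep[OF w] by blast
    have r0: "r \<noteq> 0" "r \<noteq> m" using wu r sh_0'[OF u r(1)] sh_m'[OF u r(1)] by auto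
    have dw: "diam w = sh ((r + m) mod N) u" using diam_sh r(2) by metis
    have "(r + m) mod N < N" using N6 by simp
    then show "tt ?G w \<longleftrightarrow> tt ?G (diam w)"
      using mL[OF u r(1)] mL[OF u] dw QB[OF r(1) r0] r(2) unfolding tt_def by simp
  qed
  have s3: "tt ?G u" "{u, bwd u} \<in> ?G" "tt ?G (diam u)" "{diam u, bwd (diam u)} \<in> ?G"
  proof -
    have N0: "0 < N" using N6 by simp
    show "tt ?G u" using mL[OF u N0] sh_0[OF u] QQ_special unfolding tt_def by simp
    have "(0 + m + 1) mod N = m + 1" using N_m m3 by simp
    then show "{u, bwd u} \<in> ?G" using bw[OF N0] sh_0[OF u] QQ_special by simp
    show "tt ?G (diam u)" using mL[OF u m_lt(1)] QQ_special unfolding tt_def by simp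
    show "{diam u, bwd (diam u)} \<in> ?G" using bw[OF m_lt(1)] QQ_special mm1 by simp
  qed
  show ?thesis unfolding Str_def using u tf O s1 s2 s3 s4 by blast
qed

end

lemma ce_img: "cycle_edges vs = (\<lambda>i. {vs!i, vs!((i+1) mod length vs)}) ` {..<length vs}"
  unfolding cycle_edges_def by auto
lemma cycle4: "cycle_edges [a,b,c,d] = {{d,a},{c,d},{b,c},{a,b}}"
  unfolding ce_img by (simp add: lessThan_Suc)
lemma cycle6: "cycle_edges [a,b,c,d,e,f] = {{f,a},{e,f},{d,e},{c,d},{b,c},{a,b}}"
  unfolding ce_img by (simp add: lessThan_Suc)

context nn begin

lemma sh_comm: "sh a (sh b x) = sh b (sh a x)"
  using sh_sh by (simp add: add.commute)

lemma Fam_shift: "(\<lambda>e. sh k ` e) ` Fam u = Fam (sh k u)"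
proof -
  have im1: "sh k ` {sh r u, diam (sh r u)} = {sh r (sh k u), diam (sh r (sh k u))}" for r
    using sh_comm by simp
  have im2: "sh k ` {sh r u, fwd (sh r u)} = {sh r (sh k u), fwd (sh r (sh k u))}" for r
    using sh_comm by simp
  show ?thesis
  proof
    show "(\<lambda>e. sh k ` e) ` Fam u \<subseteq> Fam (sh k u)"
    proof
      fix x assume "x \<in> (\<lambda>e. sh k ` e) ` Fam u"
      then obtain f where f: "f \<in> Fam u" "x = sh k ` f" by blast
      from f(1) consider r where "f = {sh r u, diam (sh r u)}" "r < N" "r \<noteq> 0" "r \<noteq> m"
        | r where "f = {sh r u, fwd (sh r u)}" "r < N" "QQ r" unfolding Fam_def by blast
      then show "x \<in> Fam (sh k u)"
      proof cases
        case 1 then show ?thesis using f(2) im1 unfolding Fam_def by blast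
      next
        case 2 then show ?thesis using f(2) im2 unfolding Fam_def by blast
      qed
    qed
  next
    show "Fam (sh k u) \<subseteq> (\<lambda>e. sh k ` e) ` Fam u"
    proof
      fix x assume "x \<in> Fam (sh k u)"
      then consider r where "x = {sh r (sh k u), diam (sh r (sh k u))}" "r < N" "r \<noteq> 0" "r \<noteq> m"
        | r where "x = {sh r (sh k u), fwd (sh r (sh k u))}" "r < N" "QQ r" unfolding Fam_def by blast
      then show "x \<in> (\<lambda>e. sh k ` e) ` Fam u"
      proof cases
        case 1
        then have "{sh r u, diam (sh r u)} \<in> Fam u" unfolding Fam_def by blast
        then show ?thesis using 1 im1[of r] by (metis image_eqI)
      next
        case 2
        then have "{sh r u, fwd (sh r u)} \<in> Fam u" unfolding Fam_def by blast
        then show ?thesis using 2 im2[of r] by (metis image_eqI)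
      qed
    qed
  qed
qed

lemma sh_1: "r < N \<Longrightarrow> sh r 1 = r + 1"
  using sh_alt[of 1 r] N6 by simp

lemma Fam1: "Fam 1 = {{w, diam w} | w. w \<in> V \<and> w \<noteq> 1 \<and> w \<noteq> m + 1} \<union> {{w, fwd w} | w. w \<in> V \<and> QQ (w - 1)}"
proof -
  have a: "{{sh r 1, diam (sh r 1)} | r. r < N \<and> r \<noteq> 0 \<and> r \<noteq> m} = {{w, diam w} | w. w \<in> V \<and> w \<noteq> 1 \<and> w \<noteq> m + 1}"
  proof (rule set_eqI, rule iffI)
    fix x assume "x \<in> {{sh r 1, diam (sh r 1)} | r. r < N \<and> r \<noteq> 0 \<and> r \<noteq> m}"
    then obtain r where r: "x = {sh r 1, diam (sh r 1)}" "r < N" "r \<noteq> 0" "r \<noteq> m" by blast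
    then have "x = {r + 1, diam (r + 1)}" "r + 1 \<in> V" "r + 1 \<noteq> 1" "r + 1 \<noteq> m + 1" using sh_1 by auto
    then show "x \<in> {{w, diam w} | w. w \<in> V \<and> w \<noteq> 1 \<and> w \<noteq> m + 1}" by blast
  next
    fix x assume "x \<in> {{w, diam w} | w. w \<in> V \<and> w \<noteq> 1 \<and> w \<noteq> m + 1}"
    then obtain w where w: "x = {w, diam w}" "w \<in> V" "w \<noteq> 1" "w \<noteq> m + 1" by blast
    have w1: "w - 1 < N" using w by auto
    have eqw: "sh (w - 1) 1 = w" using sh_1[OF w1] w by simp
    have "w - 1 \<noteq> 0" "w - 1 \<noteq> m" using w by auto
    moreover have "x = {sh (w - 1) 1, diam (sh (w - 1) 1)}" by (simp only: eqw w(1))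
    ultimately show "x \<in> {{sh r 1, diam (sh r 1)} | r. r < N \<and> r \<noteq> 0 \<and> r \<noteq> m}" using w1 by blast
  qed
  have b: "{{sh r 1, fwd (sh r 1)} | r. r < N \<and> QQ r} = {{w, fwd w} | w. w \<in> V \<and> QQ (w - 1)}"
  proof (rule set_eqI, rule iffI)
    fix x assume "x \<in> {{sh r 1, fwd (sh r 1)} | r. r < N \<and> QQ r}"
    then obtain r where r: "x = {sh r 1, fwd (sh r 1)}" "r < N" "QQ r" by blast
    then have "x = {r + 1, fwd (r + 1)}" "r + 1 \<in> V" "QQ (r + 1 - 1)" using sh_1 by auto
    then show "x \<in> {{w, fwd w} | w. w \<in> V \<and> QQ (w - 1)}" by blast
  next
    fix x assume "x \<in> {{w, fwd w} | w. w \<in> V \<and> QQ (w - 1)}"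
    then obtain w where w: "x = {w, fwd w}" "w \<in> V" "QQ (w - 1)" by blast
    have w1: "w - 1 < N" using w by auto
    have eqw: "sh (w - 1) 1 = w" using sh_1[OF w1] w by simp
    have "x = {sh (w - 1) 1, fwd (sh (w - 1) 1)}" by (simp only: eqw w(1))
    then show "x \<in> {{sh r 1, fwd (sh r 1)} | r. r < N \<and> QQ r}" using w1 w(3) by blast
  qed
  show ?thesis unfolding Fam_def a b ..
qed

end

context nn begin

definition P6 where "P6 = {{m+2,1},{2,m+2},{m+1,2},{N,m+1},{m,N},{1,m}}"
definition P4 where "P4 a = {{a+m+1, a},{a+1,a+m+1},{a+m,a+1},{a,a+m}}"
definition AA where "AA = {a. odd a \<and> 3 \<le> a \<and> a + 2 \<le> m}"

lemma pi_eq: "pi_factor N = P6 \<union> (\<Union>a\<in>AA. P4 a)"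
  unfolding pi_factor_def P6_def P4_def AA_def m_def[symmetric] cycle4 cycle6 by simp

lemma fwd_val: "w \<in> V \<Longrightarrow> w \<le> m + 1 \<Longrightarrow> fwd w = w + m - 1" using fwd_alt by simp
lemma fwd_val2: "w \<in> V \<Longrightarrow> m + 1 < w \<Longrightarrow> fwd w = w - m - 1" using fwd_alt by simp
lemma diam_val: "w \<in> V \<Longrightarrow> w \<le> m \<Longrightarrow> diam w = w + m" using diam_alt by simp
lemma diam_val2: "w \<in> V \<Longrightarrow> m < w \<Longrightarrow> diam w = w - m" using diam_alt by simp

abbreviation DD where "DD \<equiv> {{w, diam w} | w. w \<in> V \<and> w \<noteq> 1 \<and> w \<noteq> m + 1}"
abbreviation LL where "LL \<equiv> {{w, fwd w} | w. w \<in> V \<and> QQ (w - 1)}"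

lemma inD: "w \<in> V \<Longrightarrow> w \<noteq> 1 \<Longrightarrow> w \<noteq> m + 1 \<Longrightarrow> f = {w, diam w} \<Longrightarrow> f \<in> DD" by blast
lemma inL: "w \<in> V \<Longrightarrow> QQ (w - 1) \<Longrightarrow> f = {w, fwd w} \<Longrightarrow> f \<in> LL" by blast

lemma pi_sub: "pi_factor N \<subseteq> DD \<union> LL"
proof -
  have mN: "m + m = N" using N_m by simp
  have P6s: "P6 \<subseteq> DD \<union> LL"
  proof -
    have "{m+2,1} \<in> LL" by (rule inL[of "m+2"]) (use N_m m3 fwd_val2[of "m+2"] QQ_special in \<open>auto simp: insert_commute\<close>)
    moreover have "{2,m+2} \<in> DD" by (rule inD[of 2]) (use N_m m3 diam_val[of 2] in auto)
    moreover have "{m+1,2} \<in> LL" by (rule inL[of 2]) (use N_m m3 fwd_val[of 2] QQ_special in \<open>auto simp: insert_commute\<close>)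
    moreover have "{N,m+1} \<in> LL" by (rule inL[of "m+1"]) (use N_m m3 fwd_val[of "m+1"] QQ_special in \<open>auto simp: insert_commute\<close>)
    moreover have "{m,N} \<in> DD" by (rule inD[of m]) (use N_m m3 diam_val[of m] in auto)
    moreover have "{1,m} \<in> LL" by (rule inL[of 1]) (use N_m m3 fwd_val[of 1] QQ_special in auto)
    ultimately show ?thesis unfolding P6_def by blast
  qed
  have P4s: "P4 a \<subseteq> DD \<union> LL" if a: "a \<in> AA" for a
  proof -
    have aa: "odd a" "3 \<le> a" "a + 2 \<le> m" using a unfolding AA_def by auto
    have QQa: "QQ a" "QQ (a + m)" using aa m_odd unfolding QQ_def by auto
    have "{a+m+1, a} \<in> LL" by (rule inL[of "a+m+1"]) (use N_m aa QQa fwd_val2[of "a+m+1"] in auto)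
    moreover have "{a+1, a+m+1} \<in> DD" by (rule inD[of "a+1"]) (use N_m aa diam_val[of "a+1"] in auto)
    moreover have "{a+m, a+1} \<in> LL" by (rule inL[of "a+1"]) (use N_m aa QQa fwd_val[of "a+1"] in \<open>auto simp: insert_commute\<close>)
    moreover have "{a, a+m} \<in> DD" by (rule inD[of a]) (use N_m aa diam_val[of a] in auto)
    ultimately show ?thesis unfolding P4_def by blast
  qed
  show ?thesis unfolding pi_eq using P6s P4s by blast
qed

lemma in_pi4: "a \<in> AA \<Longrightarrow> f \<in> P4 a \<Longrightarrow> f \<in> pi_factor N" unfolding pi_eq by blast
lemma in_pi6: "f \<in> P6 \<Longrightarrow> f \<in> pi_factor N" unfolding pi_eq by blast

lemma sub_pi: "DD \<union> LL \<subseteq> pi_factor N"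
proof
  fix f assume "f \<in> DD \<union> LL"
  then consider w where "f = {w, diam w}" "w \<in> V" "w \<noteq> 1" "w \<noteq> m + 1" | w where "f = {w, fwd w}" "w \<in> V" "QQ (w - 1)"
    by blast
  then show "f \<in> pi_factor N"
  proof cases
    case 1
    define x where "x = (if w \<le> m then w else w - m)"
    have x: "2 \<le> x" "x \<le> m" "f = {x, x + m}"
    proof -
      show "2 \<le> x" "x \<le> m" using 1 N_m unfolding x_def by auto
      show "f = {x, x + m}"
      proof (cases "w \<le> m")
        case True then show ?thesis using 1 diam_val[of w] unfolding x_def by simp
      next
        case False then show ?thesis using 1 diam_val2[of w] unfolding x_def by auto
      qed
    qed
    consider "x = 2" | "x = m" | "3 \<le> x" "x \<le> m - 1" "odd x" | "3 \<le> x" "x \<le> m - 1" "even x" using x by linarith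
    then show ?thesis
    proof cases
      case 1 then show ?thesis using x by (intro in_pi6) (simp add: P6_def)
    next
      case 2
      have "m + m = N" using N_m by simp
      then have "f = {m, N}" using x 2 by simp
      then show ?thesis by (intro in_pi6) (simp add: P6_def)
    next
      case 3
      obtain q where q: "m = 2 * q + 1" using m_odd oddE by blast
      have "x + 2 \<le> m" using 3 q by presburger
      then have "x \<in> AA" using 3 unfolding AA_def by simp
      then show ?thesis using x by (intro in_pi4[of x]) (auto simp: P4_def)
    next
      case 4
      have "4 \<le> x" using 4 by presburger
      then have "x - 1 \<in> AA" using 4 unfolding AA_def by auto
      moreover have "f = {(x - 1) + 1, (x - 1) + m + 1}" using x 4 by simp
      ultimately show ?thesis by (intro in_pi4[of "x - 1"]) (auto simp: P4_def)
    qed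
  next
    case 2
    note w = 2
    obtain q where q: "m = 2 * q + 1" using m_odd oddE by blast
    have wq: "w - 1 = 0 \<or> w - 1 = m \<or> (w - 1 < m \<and> odd (w - 1)) \<or> (m < w - 1 \<and> even (w - 1))"
      using w(3) unfolding QQ_def .
    have w1: "1 \<le> w" using w by simp
    consider "w = 1" | "w = m + 1" | "2 \<le> w" "w \<le> m" "odd (w - 1)" | "m + 2 \<le> w" "even (w - 1)"
    proof -
      from wq show thesis
      proof (elim disjE)
        assume "w - 1 = 0" then show thesis using that(1) w1 by simp
      next
        assume "w - 1 = m" then show thesis using that(2) w1 by simp
      next
        assume h: "w - 1 < m \<and> odd (w - 1)"
        then have "w \<noteq> 1" by auto
        show thesis by (rule that(3)) (use h w1 \<open>w \<noteq> 1\<close> in auto)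
      next
        assume h: "m < w - 1 \<and> even (w - 1)"
        show thesis by (rule that(4)) (use h w1 in auto)
      qed
    qed
    then show ?thesis
    proof cases
      case 1
      then have "f = {1, m}" using w fwd_val[of 1] by simp
      then show ?thesis by (intro in_pi6) (simp add: P6_def)
    next
      case 2
      then have "f = {N, m + 1}" using w fwd_val[of "m+1"] N_m by (auto simp: insert_commute)
      then show ?thesis by (intro in_pi6) (simp add: P6_def)
    next
      case 3
      have fw: "f = {w, w + m - 1}" using w 3 fwd_val[of w] by simp
      show ?thesis
      proof (cases "w = 2")
        case True then show ?thesis using fw by (intro in_pi6) (auto simp: P6_def insert_commute)
      next
        case False
        have "w \<noteq> m" using 3 q by auto
        then have "w - 1 \<in> AA" using 3 False q unfolding AA_def by auto
        moreover have "f = {(w - 1) + m, (w - 1) + 1}" using fw 3 by (auto simp: insert_commute)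
        ultimately show ?thesis by (intro in_pi4[of "w - 1"]) (auto simp: P4_def)
      qed
    next
      case 4
      have "odd w" using 4 w1 by (cases w) auto
      then have "w \<noteq> N" using Nev by auto
      then have wN: "w \<le> N - 1" using w by auto
      have fw: "f = {w, w - m - 1}" using w 4 fwd_val2[of w] by simp
      show ?thesis
      proof (cases "w = m + 2")
        case True then show ?thesis using fw by (intro in_pi6) (auto simp: P6_def)
      next
        case False
        have "w - m - 1 \<in> AA" using 4 False q wN N_m unfolding AA_def by auto presburger+
        moreover have "f = {(w - m - 1) + m + 1, w - m - 1}" using fw 4 by auto
        ultimately show ?thesis by (intro in_pi4[of "w - m - 1"]) (auto simp: P4_def)
      qed
    qed
  qed
qed

lemma pi_Fam: "pi_factor N = Fam 1"
  unfolding Fam1 by (rule subset_antisym[OF pi_sub sub_pi])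

end

context nn begin

lemma hstar_Fam: "h_star N k = Fam (sh k 1)"
  unfolding h_star_def pi_Fam using Fam_shift by simp

lemma hstar_str: "Str (sh k 1) (h_star N k)"
  unfolding hstar_Fam using Fam_str sh_in by blast

lemma all_le: "two_factor N G \<Longrightarrow> 2 * crossings G \<le> N * (N - 4) + m - 1"
proof -
  assume tf: "two_factor N G"
  have "2 * crossings G \<le> N * (N - 4) + m" using upper[OF tf] Ds_le[OF tf_finite[OF tf]] by linarith
  moreover have "even (N * (N - 4))" using Nev by simp
  moreover have "odd m" using m_odd .
  ultimately show ?thesis by presburger
qed

lemma main: "{F. two_factor N F \<and> (\<forall>G. two_factor N G \<longrightarrow> crossings G \<le> crossings F)} = {h_star N k | k. k < N}"
proof
  show "{F. two_factor N F \<and> (\<forall>G. two_factor N G \<longrightarrow> crossings G \<le> crossings F)} \<subseteq> {h_star N k | k. k < N}"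
  proof
    fix F assume "F \<in> {F. two_factor N F \<and> (\<forall>G. two_factor N G \<longrightarrow> crossings G \<le> crossings F)}"
    then have tf: "two_factor N F" and mx: "\<And>G. two_factor N G \<Longrightarrow> crossings G \<le> crossings F" by auto
    have S0: "Str (sh 0 1) (h_star N 0)" using hstar_str .
    have "two_factor N (h_star N 0)" using S0 unfolding Str_def by simp
    then have "crossings (h_star N 0) \<le> crossings F" using mx by simp
    then have "N * (N - 4) + m - 1 \<le> 2 * crossings F" using str_cross[OF S0] by simp
    then obtain u where u: "u \<in> {1..m}" "Str u F" using opt_str[OF tf] by blast
    have F: "F = Fam u" using str_Fam[OF u(2)] .
    have k: "u - 1 < N" "sh (u - 1) 1 = u" using u N_m sh_1[of "u - 1"] by auto
    have "F = h_star N (u - 1)" using F hstar_Fam k by simp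
    then show "F \<in> {h_star N k | k. k < N}" using k by blast
  qed
next
  show "{h_star N k | k. k < N} \<subseteq> {F. two_factor N F \<and> (\<forall>G. two_factor N G \<longrightarrow> crossings G \<le> crossings F)}"
  proof
    fix F assume "F \<in> {h_star N k | k. k < N}"
    then obtain k where F: "F = h_star N k" by blast
    have S: "Str (sh k 1) F" using hstar_str F by simp
    have tf: "two_factor N F" using S unfolding Str_def by simp
    have "\<forall>G. two_factor N G \<longrightarrow> crossings G \<le> crossings F"
      using all_le str_cross[OF S] by fastforce
    then show "F \<in> {F. two_factor N F \<and> (\<forall>G. two_factor N G \<longrightarrow> crossings G \<le> crossings F)}"
      using tf by blast
  qed
qed

end

theorem propositionB2:
  fixes N :: nat
  assumes "N \<ge> 6" and "even N" and "\<not> 4 dvd N"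
  shows "{F. two_factor N F \<and> (\<forall>G. two_factor N G \<longrightarrow> crossings G \<le> crossings F)}
         = {h_star N k | k. k < N}"
proof -
  interpret nn N using assms by unfold_locales
  show ?thesis using main .
qed

end
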